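(* Let $k \geq 3$, $\epsilon > 0$, let $G$ be a finite abelian group with $N = |G|$, let $A_1,\dots,A_k \subseteq G$ and let $(R,\eta)$ be a pair which is $\epsilon$-regular for each $A_i$ (with respect to the parameters $k,\epsilon$). Suppose that $x_1,\dots,x_k \in G$ satisfy $x_1 + \dots + x_k = 0$ and that, for each $i$, $x_i$ is an $\epsilon$-regular value with respect to $A_i$ and $(R,\eta)$. Then \[ \left| T\left(A_1^{+x_1}\psi_1^{1/2}, A_2^{+x_2}\psi_2,\dots,A_{k-1}^{+x_{k-1}}\psi_2, A_k^{+x_k}\psi_1^{1/2}\right) - \alpha_{1,1}^{x_1}\alpha_{2,2}^{x_2}\alpha_{3,2}^{x_3}\cdots\alpha_{k-1,2}^{x_{k-1}}\alpha_{k,1}^{x_k}\right| \leq 4\cdot 2^k\epsilon. \]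
   Context: $G^{\ast}$ is the group of characters $\gamma : G \to \mathbb{C}$; $\widehat{f}(\gamma) = \sum_x f(x)\gamma(x)$; $f \ast g(x) = \sum_y f(y)g(x-y)$; sets are identified with indicator functions; arguments of complex numbers lie in $(-\pi,\pi]$. For $\Gamma = \{\gamma_1,\dots,\gamma_d\} \subseteq G^{\ast}$ let $\|x\|_\Gamma = \max_j|\arg\gamma_j(x)|/(2\pi)$ ($\|x\|_\emptyset = 0$), $B_{\Gamma,t} = \{x : \|x\|_\Gamma \leq t\}$, $\widetilde{B}_{\Gamma,\delta}(x) = \int_0^\infty B_{\Gamma,t}(x)\delta^{-1}e^{-t/\delta}\,dt$, $\beta_{\Gamma,\delta} = \widetilde{B}_{\Gamma,\delta}/\sum_y\widetilde{B}_{\Gamma,\delta}(y)$, $\psi_{\Gamma,\delta} = \beta_{\Gamma,\delta} \ast \beta_{\Gamma,\delta}$. For a pair $(R,\eta)$ with $R \subseteq G^{\ast}$, $d = |R|$, $\eta \in (0,1]$: $\psi_1 = \psi_{R,\eta}$, $\psi_2 = \psi_{R,\eta_2}$ with $\eta_2 = 2^{-40}\epsilon^6\eta/(dk^4)$ (for $d=0$ all $\psi_{\emptyset,\delta} \equiv 1/N$, so $\eta_2$ is immaterial). For $A \subseteq G$, $\alpha_j^x = (A \ast \psi_j)(x)$, and for the sets $A_i$ write $\alpha_{i,j}^x = (A_i \ast \psi_j)(x)$; $A^{+x}(n) = A(x+n)$. A point $x$ is an $\epsilon$-regular value w.r.t. $A$ and $(R,\eta)$ if (i) $\sum_y(\alpha_2^{x+y}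 - \alpha_1^x)^2\psi_1(y) \leq \epsilon^2$ and (ii) $\left|\sum_n (A(x+n) - \alpha_2^x)\psi_2(n)\gamma(n)\right| \leq \epsilon$ for all $\gamma \in G^{\ast}$. $(R,\eta)$ is $\epsilon$-regular for $A$ if fewer than $\epsilon N$ points $x$ are not $\epsilon$-regular values. For $f_1,\dots,f_k : G \to \mathbb{R}$, $T(f_1,\dots,f_k) = \sum_{x_1+\dots+x_k = 0} f_1(x_1)\cdots f_k(x_k)$; products such as $A_i^{+x_i}\psi_2$ are pointwise products. *)

theory Defs
  imports "HOL-Analysis.Analysis"
begin

definition character :: "('a::{ab_group_add,finite} \<Rightarrow> complex) \<Rightarrow> bool" where
  "character \<gamma> \<longleftrightarrow> (\<forall>x y. \<gamma> (x + y) = \<gamma> x * \<gamma> y) \<and> (\<forall>x. \<gamma> x \<noteq> 0)"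

definition characters :: "('a::{ab_group_add,finite} \<Rightarrow> complex) set" where
  "characters = {\<gamma>. character \<gamma>}"

(* \<parallel>x\<parallel>_\<Gamma> = max_j |arg \<gamma>_j(x)| / (2\<pi>), and 0 for \<Gamma> = {};  Arg takes values in (-pi, pi] *)
definition gnorm :: "('a::{ab_group_add,finite} \<Rightarrow> complex) set \<Rightarrow> 'a \<Rightarrow> real" where
  "gnorm \<Gamma> x = (if \<Gamma> = {} then 0 else Max ((\<lambda>\<gamma>. \<bar>Arg (\<gamma> x)\<bar> / (2 * pi)) ` \<Gamma>))"

definition bohr :: "('a::{ab_group_add,finite} \<Rightarrow> complex) set \<Rightarrow> real \<Rightarrow> 'a set" where
  "bohr \<Gamma> t = {x. gnorm \<Gamma> x \<le> t}"

definition bohr_smooth :: "('a::{ab_group_add,finite} \<Rightarrow> complex) set \<Rightarrow> real \<Rightarrow> 'a \<Rightarrow> real" where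
  "bohr_smooth \<Gamma> \<delta> x =
     (LINT t:{0..}|lborel. indicator (bohr \<Gamma> t) x * (1 / \<delta>) * exp (- t / \<delta>))"

definition beta :: "('a::{ab_group_add,finite} \<Rightarrow> complex) set \<Rightarrow> real \<Rightarrow> 'a \<Rightarrow> real" where
  "beta \<Gamma> \<delta> x = bohr_smooth \<Gamma> \<delta> x / (\<Sum>y\<in>UNIV. bohr_smooth \<Gamma> \<delta> y)"

definition conv :: "('a::{ab_group_add,finite} \<Rightarrow> real) \<Rightarrow> ('a \<Rightarrow> real) \<Rightarrow> 'a \<Rightarrow> real" where
  "conv f g x = (\<Sum>y\<in>UNIV. f y * g (x - y))"

definition psi :: "('a::{ab_group_add,finite} \<Rightarrow> complex) set \<Rightarrow> real \<Rightarrow> 'a \<Rightarrow> real" where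
  "psi \<Gamma> \<delta> = (if \<Gamma> = {} then (\<lambda>_. 1 / real CARD('a)) else conv (beta \<Gamma> \<delta>) (beta \<Gamma> \<delta>))"

definition eta2 :: "nat \<Rightarrow> real \<Rightarrow> ('a::{ab_group_add,finite} \<Rightarrow> complex) set \<Rightarrow> real \<Rightarrow> real" where
  "eta2 k \<epsilon> R \<eta> = \<epsilon> ^ 6 * \<eta> / (2 ^ 40 * real (card R) * real k ^ 4)"

definition psi1 :: "('a::{ab_group_add,finite} \<Rightarrow> complex) set \<Rightarrow> real \<Rightarrow> 'a \<Rightarrow> real" where
  "psi1 R \<eta> = psi R \<eta>"

definition psi2 :: "nat \<Rightarrow> real \<Rightarrow> ('a::{ab_group_add,finite} \<Rightarrow> complex) set \<Rightarrow> real \<Rightarrow> 'a \<Rightarrow> real" where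
  "psi2 k \<epsilon> R \<eta> = psi R (eta2 k \<epsilon> R \<eta>)"

definition alpha1 :: "'a::{ab_group_add,finite} set \<Rightarrow> ('a \<Rightarrow> complex) set \<Rightarrow> real \<Rightarrow> 'a \<Rightarrow> real" where
  "alpha1 A R \<eta> x = conv (indicator A) (psi1 R \<eta>) x"

definition alpha2 :: "nat \<Rightarrow> real \<Rightarrow> 'a::{ab_group_add,finite} set \<Rightarrow> ('a \<Rightarrow> complex) set \<Rightarrow> real \<Rightarrow> 'a \<Rightarrow> real" where
  "alpha2 k \<epsilon> A R \<eta> x = conv (indicator A) (psi2 k \<epsilon> R \<eta>) x"

definition regular_value ::
  "nat \<Rightarrow> real \<Rightarrow> 'a::{ab_group_add,finite} set \<Rightarrow> ('a \<Rightarrow> complex) set \<Rightarrow> real \<Rightarrow> 'a \<Rightarrow> bool" where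
  "regular_value k \<epsilon> A R \<eta> x \<longleftrightarrow>
     (\<Sum>y\<in>UNIV. (alpha2 k \<epsilon> A R \<eta> (x + y) - alpha1 A R \<eta> x)\<^sup>2 * psi1 R \<eta> y) \<le> \<epsilon>\<^sup>2 \<and>
     (\<forall>\<gamma>\<in>characters.
        cmod (\<Sum>n\<in>UNIV. complex_of_real ((indicator A (x + n) - alpha2 k \<epsilon> A R \<eta> x) * psi2 k \<epsilon> R \<eta> n) * \<gamma> n)
          \<le> \<epsilon>)"

definition regular_pair ::
  "nat \<Rightarrow> real \<Rightarrow> 'a::{ab_group_add,finite} set \<Rightarrow> ('a \<Rightarrow> complex) set \<Rightarrow> real \<Rightarrow> bool" where
  "regular_pair k \<epsilon> A R \<eta> \<longleftrightarrow>
     real (card {x. \<not> regular_value k \<epsilon> A R \<eta> x}) < \<epsilon> * real CARD('a)"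

definition Tform :: "nat \<Rightarrow> (nat \<Rightarrow> 'a::{ab_group_add,finite} \<Rightarrow> real) \<Rightarrow> real" where
  "Tform k f = (\<Sum>x\<in>{x\<in>PiE {1..k} (\<lambda>_. UNIV). (\<Sum>i=1..k. x i) = 0}. \<Prod>i=1..k. f i (x i))"

end

theory Submission
  imports Defs
begin

primrec gmul :: "nat \<Rightarrow> 'a::ab_group_add \<Rightarrow> 'a" where
  "gmul 0 g = 0" | "gmul (Suc n) g = g + gmul n g"

lemma gmul_add: "gmul (a + b) g = gmul a g + gmul b g"
  by (induction a) (auto simp: algebra_simps)

lemma gmul_1[simp]: "gmul 1 g = g" by simp

definition subgrp :: "'a::ab_group_add set \<Rightarrow> bool" where
  "subgrp H \<longleftrightarrow> 0 \<in> H \<and> (\<forall>x\<in>H. \<forall>y\<in>H. x + y \<in> H) \<and> (\<forall>x\<in>H. - x \<in> H)"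

definition pchar :: "'a::ab_group_add set \<Rightarrow> ('a \<Rightarrow> complex) \<Rightarrow> bool" where
  "pchar H \<xi> \<longleftrightarrow> (\<forall>x\<in>H. \<forall>y\<in>H. \<xi> (x + y) = \<xi> x * \<xi> y) \<and> (\<forall>x\<in>H. \<xi> x \<noteq> 0)"

lemma subgrp_gmul: "subgrp H \<Longrightarrow> h \<in> H \<Longrightarrow> gmul n h \<in> H"
  by (induction n) (auto simp: subgrp_def)

lemma subgrp_diff: "subgrp H \<Longrightarrow> a \<in> H \<Longrightarrow> b \<in> H \<Longrightarrow> a - b \<in> H"
  unfolding subgrp_def by (metis diff_conv_add_uminus)

lemma pchar_0: "subgrp H \<Longrightarrow> pchar H \<xi> \<Longrightarrow> \<xi> 0 = 1"
proof -
  assume "subgrp H" "pchar H \<xi>"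
  then have h0: "0 \<in> H" by (simp add: subgrp_def)
  then have "\<xi> (0+0) = \<xi> 0 * \<xi> 0" "\<xi> 0 \<noteq> 0" using \<open>pchar H \<xi>\<close> unfolding pchar_def by blast+
  then have "\<xi> 0 * 1 = \<xi> 0 * \<xi> 0" by simp
  then show ?thesis using \<open>\<xi> 0 \<noteq> 0\<close> by (metis mult_left_cancel)
qed

lemma gmul_exists:
  fixes g :: "'a::{ab_group_add,finite}"
  shows "\<exists>m. 0 < m \<and> gmul m g = 0"
proof -
  have "\<not> inj_on (\<lambda>i. gmul i g) {..CARD('a)}"
  proof
    assume "inj_on (\<lambda>i. gmul i g) {..CARD('a)}"
    then have "card ((\<lambda>i. gmul i g) ` {..CARD('a)}) = Suc CARD('a)"
      by (simp add: card_image)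
    moreover have "card ((\<lambda>i. gmul i g) ` {..CARD('a)}) \<le> CARD('a)"
      by (rule card_mono) auto
    ultimately show False by simp
  qed
  then obtain i j where ij: "i \<le> CARD('a)" "j \<le> CARD('a)" "i \<noteq> j" "gmul i g = gmul j g"
    unfolding inj_on_def by auto
  show ?thesis
  proof (cases "i < j")
    case True
    then have "gmul j g = gmul i g + gmul (j - i) g" by (metis gmul_add le_add_diff_inverse less_imp_le)
    then show ?thesis using ij True by (intro exI[of _ "j - i"]) auto
  next
    case False
    then have "gmul i g = gmul j g + gmul (i - j) g" using ij by (metis gmul_add le_add_diff_inverse not_less)
    then show ?thesis using ij False by (intro exI[of _ "i - j"]) auto
  qed
qed

lemma least_mult:
  fixes g :: "'a::{ab_group_add,finite}"
  assumes "subgrp H"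
  defines "m \<equiv> (LEAST m. 0 < m \<and> gmul m g \<in> H)"
  shows "0 < m" "gmul m g \<in> H" "\<And>j. 0 < j \<Longrightarrow> j < m \<Longrightarrow> gmul j g \<notin> H"
proof -
  obtain m0 where "0 < m0" "gmul m0 g = 0" using gmul_exists by blast
  then have ex: "0 < m0 \<and> gmul m0 g \<in> H" using assms(1) by (auto simp: subgrp_def)
  show "0 < m" "gmul m g \<in> H" using LeastI[of "\<lambda>m. 0 < m \<and> gmul m g \<in> H", OF ex] by (auto simp: m_def)
  show "\<And>j. 0 < j \<Longrightarrow> j < m \<Longrightarrow> gmul j g \<notin> H" using not_less_Least m_def by blast
qed

lemma extend_step:
  fixes g :: "'a::{ab_group_add,finite}"
  assumes H: "subgrp H" and ch: "pchar H \<xi>" and gH: "g \<notin> H"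
  defines "m \<equiv> (LEAST m. 0 < m \<and> gmul m g \<in> H)"
  assumes c: "c ^ m = \<xi> (gmul m g)"
  shows "\<exists>H' \<xi>'. subgrp H' \<and> pchar H' \<xi>' \<and> H \<subseteq> H' \<and> g \<in> H' \<and> (\<forall>h\<in>H. \<xi>' h = \<xi> h) \<and> \<xi>' g = c"
proof -
  note lm = least_mult[OF H, where g=g, folded m_def]
  have m2: "m \<ge> 2" using lm(1) lm(3)[of 1] lm(2) gH by (cases "m = 1") auto
  have c0: "c \<noteq> 0"
  proof
    assume "c = 0"
    moreover have "m \<noteq> 0" using m2 by simp
    ultimately have "\<xi> (gmul m g) = 0" using c by (simp add: power_0_left)
    then show False using ch lm(2) by (auto simp: pchar_def)
  qed
  define H' where "H' = {h + gmul j g | h j. h \<in> H \<and> j < m}"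
  have uniq: "h1 = h2 \<and> j1 = j2" if "h1 \<in> H" "h2 \<in> H" "j1 < m" "j2 < m" "h1 + gmul j1 g = h2 + gmul j2 g" for h1 h2 j1 j2
  proof -
    have *: "h1 = h2 \<and> j1 = j2" if "h1 \<in> H" "h2 \<in> H" "j1 < m" "j2 < m" "h1 + gmul j1 g = h2 + gmul j2 g" "j1 \<le> j2" for h1 h2 j1 j2
    proof -
      have "gmul j2 g = gmul j1 g + gmul (j2 - j1) g" using that(6) by (metis gmul_add le_add_diff_inverse)
      then have "h1 - h2 = gmul (j2 - j1) g" using that(5) by (simp add: algebra_simps)
      then have "gmul (j2 - j1) g \<in> H" using subgrp_diff[OF H that(1,2)] by simp
      then have "j2 - j1 = 0" using lm(3)[of "j2 - j1"] that by linarith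
      then show ?thesis using that by auto
    qed
    show ?thesis
    proof (cases "j1 \<le> j2")
      case True then show ?thesis using * that by blast
    next
      case False then show ?thesis using *[of h2 h1 j2 j1] that by auto
    qed
  qed
  define rep where "rep y = (SOME p. fst p \<in> H \<and> snd p < m \<and> y = fst p + gmul (snd p) g)" for y
  have rep: "rep (h + gmul j g) = (h, j)" if "h \<in> H" "j < m" for h j
  proof -
    have "fst (rep (h + gmul j g)) \<in> H \<and> snd (rep (h + gmul j g)) < m \<and> h + gmul j g = fst (rep (h + gmul j g)) + gmul (snd (rep (h + gmul j g))) g"
      unfolding rep_def by (rule someI[of _ "(h, j)"]) (use that in auto)
    then show ?thesis using uniq[of h "fst (rep (h + gmul j g))" j "snd (rep (h + gmul j g))"] that
      by (metis prod.collapse)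
  qed
  define \<xi>' where "\<xi>' y = \<xi> (fst (rep y)) * c ^ snd (rep y)" for y
  have \<xi>'_eq: "\<xi>' (h + gmul j g) = \<xi> h * c ^ j" if "h \<in> H" "j < m" for h j
    using rep[OF that] by (simp add: \<xi>'_def)
  have add: "\<exists>h j. h \<in> H \<and> j < m \<and> y1 + y2 = h + gmul j g \<and> \<xi>' (y1 + y2) = \<xi>' y1 * \<xi>' y2"
    if hy: "y1 \<in> H'" "y2 \<in> H'" for y1 y2
  proof -
    obtain h1 j1 where 1: "h1 \<in> H" "j1 < m" "y1 = h1 + gmul j1 g" using hy(1) unfolding H'_def by blast
    obtain h2 j2 where 2: "h2 \<in> H" "j2 < m" "y2 = h2 + gmul j2 g" using hy(2) unfolding H'_def by blast
    have hh: "h1 + h2 \<in> H" using H 1 2 by (auto simp: subgrp_def)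
    have e1: "\<xi>' y1 * \<xi>' y2 = \<xi> h1 * \<xi> h2 * c ^ (j1 + j2)"
      using \<xi>'_eq 1 2 by (simp add: power_add)
    show ?thesis
    proof (cases "j1 + j2 < m")
      case True
      have "y1 + y2 = (h1 + h2) + gmul (j1 + j2) g" using 1 2 by (simp add: gmul_add algebra_simps)
      moreover have "\<xi> (h1 + h2) = \<xi> h1 * \<xi> h2" using ch 1 2 by (auto simp: pchar_def)
      ultimately show ?thesis using True hh e1 \<xi>'_eq[OF hh True] by auto
    next
      case False
      define j where "j = j1 + j2 - m"
      have jm: "j < m" "j1 + j2 = m + j" using False 1 2 by (auto simp: j_def)
      have hm: "gmul m g \<in> H" by (rule lm(2))
      have hh2: "h1 + h2 + gmul m g \<in> H" using H hh hm by (auto simp: subgrp_def)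
      have "gmul j1 g + gmul j2 g = gmul m g + gmul j g" using jm(2) by (metis gmul_add)
      then have "y1 + y2 = (h1 + h2 + gmul m g) + gmul j g" using 1 2 by (simp add: algebra_simps)
      moreover have "\<xi> (h1 + h2 + gmul m g) = \<xi> h1 * \<xi> h2 * c ^ m"
        using ch 1 2 hh hm c by (auto simp: pchar_def)
      ultimately show ?thesis using hh2 jm e1 \<xi>'_eq[OF hh2 jm(1)]
        by (intro exI[of _ "h1 + h2 + gmul m g"] exI[of _ j]) (auto simp: power_add)
    qed
  qed
  have sg: "subgrp H'"
    unfolding subgrp_def
  proof (intro conjI ballI)
    show "0 \<in> H'" using H lm(1) unfolding H'_def subgrp_def by (auto intro!: exI[of _ 0])
  next
    fix y1 y2 assume "y1 \<in> H'" "y2 \<in> H'"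
    then show "y1 + y2 \<in> H'" using add unfolding H'_def by blast
  next
    fix y assume "y \<in> H'"
    then obtain h j where 1: "h \<in> H" "j < m" "y = h + gmul j g" unfolding H'_def by blast
    show "- y \<in> H'"
    proof (cases "j = 0")
      case True
      have "- h \<in> H" using 1 H by (simp add: subgrp_def)
      then have "- y = (- h) + gmul 0 g \<and> - h \<in> H \<and> (0::nat) < m" using 1 True lm(1) by simp
      then show ?thesis unfolding H'_def by blast
    next
      case False
      have "gmul m g = gmul j g + gmul (m - j) g" using 1 by (metis gmul_add le_add_diff_inverse less_imp_le)
      then have "- y = (- h - gmul m g) + gmul (m - j) g" using 1 by (simp add: algebra_simps)
      moreover have "- h - gmul m g \<in> H" using H 1 lm(2) by (metis subgrp_def subgrp_diff)
      ultimately show ?thesis using False 1 unfolding H'_def by (intro CollectI exI[of _ "- h - gmul m g"] exI[of _ "m - j"]) auto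
    qed
  qed
  have pc: "pchar H' \<xi>'"
    unfolding pchar_def
  proof (intro conjI ballI)
    fix y1 y2 assume "y1 \<in> H'" "y2 \<in> H'"
    then show "\<xi>' (y1 + y2) = \<xi>' y1 * \<xi>' y2" using add by blast
  next
    fix y assume "y \<in> H'"
    then obtain h j where 1: "h \<in> H" "j < m" "y = h + gmul j g" unfolding H'_def by blast
    then show "\<xi>' y \<noteq> 0" using \<xi>'_eq[OF 1(1,2)] ch c0 by (auto simp: pchar_def)
  qed
  have sub: "H \<subseteq> H'"
  proof
    fix h assume "h \<in> H"
    then have "h = h + gmul 0 g \<and> h \<in> H \<and> (0::nat) < m" using lm(1) by simp
    then show "h \<in> H'" unfolding H'_def by blast
  qed
  have gin: "g \<in> H'"
  proof -
    have "g = 0 + gmul 1 g \<and> 0 \<in> H \<and> (1::nat) < m" using m2 H by (simp add: subgrp_def)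
    then show ?thesis unfolding H'_def by blast
  qed
  have ext: "\<forall>h\<in>H. \<xi>' h = \<xi> h" using \<xi>'_eq[of _ 0] lm(1) by auto
  have cg: "\<xi>' g = c" using \<xi>'_eq[of 0 1] m2 H pchar_0[OF H ch] by (auto simp: subgrp_def)
  show ?thesis using sg pc sub gin ext cg by blast
qed

lemma nth_root_exists: "z \<noteq> 0 \<Longrightarrow> 0 < n \<Longrightarrow> \<exists>c::complex. c ^ n = z"
  by (intro exI[of _ "exp (Ln z / of_nat n)"]) (simp add: exp_of_nat_mult[symmetric])

lemma extend_full:
  fixes H :: "'a::{ab_group_add,finite} set"
  shows "subgrp H \<Longrightarrow> pchar H \<xi> \<Longrightarrow> \<exists>\<gamma>. character \<gamma> \<and> (\<forall>h\<in>H. \<gamma> h = \<xi> h)"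
proof (induction "card (UNIV - H)" arbitrary: H \<xi> rule: less_induct)
  case less
  show ?case
  proof (cases "H = UNIV")
    case True
    then show ?thesis using less.prems by (intro exI[of _ \<xi>]) (auto simp: character_def pchar_def)
  next
    case False
    then obtain g where gH: "g \<notin> H" by auto
    define m where "m = (LEAST m. 0 < m \<and> gmul m g \<in> H)"
    note lm = least_mult[OF less.prems(1), where g=g, folded m_def]
    have "\<xi> (gmul m g) \<noteq> 0" using less.prems(2) lm by (auto simp: pchar_def)
    then obtain c where c: "c ^ m = \<xi> (gmul m g)" using nth_root_exists lm(1) by blast
    obtain H' \<xi>' where H': "subgrp H'" "pchar H' \<xi>'" "H \<subseteq> H'" "g \<in> H'" "\<forall>h\<in>H. \<xi>' h = \<xi> h"
      using extend_step[OF less.prems gH, folded m_def, OF c] by blast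
    have "card (UNIV - H') < card (UNIV - H)"
      using H'(3,4) gH by (intro psubset_card_mono) auto
    then obtain \<gamma> where "character \<gamma>" "\<forall>h\<in>H'. \<gamma> h = \<xi>' h" using less.hyps H'(1,2) by blast
    then show ?thesis using H'(3,5) by (intro exI[of _ \<gamma>]) auto
  qed
qed

lemma separation:
  fixes s :: "'a::{ab_group_add,finite}"
  assumes "s \<noteq> 0"
  shows "\<exists>\<gamma>. character \<gamma> \<and> \<gamma> s \<noteq> 1"
proof -
  define H :: "'a set" where "H = {0}"
  have H: "subgrp H" by (auto simp: H_def subgrp_def)
  have ch: "pchar H (\<lambda>_. 1)" by (auto simp: pchar_def)
  define m where "m = (LEAST m. 0 < m \<and> gmul m s \<in> H)"
  note lm = least_mult[OF H, where g=s, folded m_def]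
  have m2: "m \<ge> 2" using lm(1) lm(3)[of 1] lm(2) assms by (cases "m = 1") (auto simp: H_def)
  define c where "c = exp (2 * pi * \<i> / of_nat m)"
  have cm: "c ^ m = 1" using m2 by (simp add: c_def exp_of_nat_mult[symmetric])
  have c1: "c \<noteq> 1"
  proof
    assume "c = 1"
    then obtain n :: int where n: "2 * pi / real m = of_int (2 * n) * pi"
      unfolding c_def exp_eq_1 by auto
    then have "1 = real m * of_int n" using m2 by (simp add: field_simps)
    then have "real m * of_int n = 1" by simp
    then have "int m * n = 1" by (metis of_int_eq_1_iff of_int_mult of_int_of_nat_eq)
    then have "int m = 1" using m2 pos_zmult_eq_1_iff[of "int m" n] by simp
    then show False using m2 by simp
  qed
  have sH: "s \<notin> H" using assms by (simp add: H_def)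
  have cm': "c ^ (LEAST m. 0 < m \<and> gmul m s \<in> H) = (\<lambda>_. 1) (gmul (LEAST m. 0 < m \<and> gmul m s \<in> H) s)"
    using cm by (simp add: m_def)
  obtain H' \<xi>' where H': "subgrp H'" "pchar H' \<xi>'" "s \<in> H'" "\<xi>' s = c"
    using extend_step[OF H ch sH cm'] by blast
  obtain \<gamma> where "character \<gamma>" "\<forall>h\<in>H'. \<gamma> h = \<xi>' h" using extend_full[OF H'(1,2)] by blast
  then show ?thesis using H' c1 by auto
qed

lemma char_mult: "character \<gamma> \<Longrightarrow> \<gamma> (x + y) = \<gamma> x * \<gamma> y" by (simp add: character_def)
lemma char_nz: "character \<gamma> \<Longrightarrow> \<gamma> x \<noteq> 0" by (simp add: character_def)

lemma char_zero: "character \<gamma> \<Longrightarrow> \<gamma> 0 = 1"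
proof -
  assume c: "character \<gamma>"
  have "\<gamma> 0 * 1 = \<gamma> 0 * \<gamma> 0" using char_mult[OF c, of 0 0] by simp
  then show ?thesis using char_nz[OF c, of 0] by (metis mult_left_cancel)
qed

lemma char_pow:
  fixes \<gamma> :: "'a::{ab_group_add,finite} \<Rightarrow> complex"
  assumes c: "character \<gamma>"
  shows "\<gamma> x ^ CARD('a) = 1"
proof -
  have "(\<Prod>y\<in>UNIV. \<gamma> y) = (\<Prod>y\<in>UNIV. \<gamma> (y + x))"
    by (rule prod.reindex_bij_witness[of _ "\<lambda>y. y + x" "\<lambda>y. y - x"]) auto
  also have "\<dots> = (\<Prod>y\<in>UNIV. \<gamma> y) * \<gamma> x ^ CARD('a)"
    by (simp add: char_mult[OF c] prod.distrib)
  finally have "(\<Prod>y\<in>UNIV. \<gamma> y) * 1 = (\<Prod>y\<in>UNIV. \<gamma> y) * \<gamma> x ^ CARD('a)" by simp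
  moreover have "(\<Prod>y\<in>UNIV. \<gamma> y) \<noteq> 0" using char_nz[OF c] by (simp add: prod_zero_iff)
  ultimately show ?thesis by (metis mult_left_cancel)
qed

lemma char_norm:
  fixes \<gamma> :: "'a::{ab_group_add,finite} \<Rightarrow> complex"
  assumes c: "character \<gamma>"
  shows "norm (\<gamma> x) = 1"
proof -
  have "norm (\<gamma> x) ^ CARD('a) = 1" using char_pow[OF c, of x] by (metis norm_one norm_power)
  then have "norm (\<gamma> x) ^ CARD('a) = 1 ^ CARD('a)" by simp
  then show ?thesis by (rule power_eq_imp_eq_base) auto
qed

lemma char_minus:
  fixes \<gamma> :: "'a::{ab_group_add,finite} \<Rightarrow> complex"
  assumes c: "character \<gamma>"
  shows "\<gamma> (- x) = cnj (\<gamma> x)"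
proof -
  have "\<gamma> (- x) * \<gamma> x = 1" using char_mult[OF c, of "-x" x] char_zero[OF c] by simp
  moreover have "cnj (\<gamma> x) * \<gamma> x = 1"
    using complex_norm_square[of "\<gamma> x"] char_norm[OF c, of x] by (simp add: mult.commute)
  ultimately show ?thesis using char_nz[OF c, of x] by (metis mult_right_cancel)
qed

lemma char_diff:
  fixes \<gamma> :: "'a::{ab_group_add,finite} \<Rightarrow> complex"
  assumes c: "character \<gamma>"
  shows "\<gamma> (x - y) = \<gamma> x * cnj (\<gamma> y)"
  using char_mult[OF c, of x "-y"] char_minus[OF c, of y] by simp

lemma char_sum:
  fixes \<gamma> :: "'a::{ab_group_add,finite} \<Rightarrow> complex"
  assumes c: "character \<gamma>"
  shows "\<gamma> (\<Sum>i\<in>I. p i) = (\<Prod>i\<in>I. \<gamma> (p i))"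
proof (cases "finite I")
  case True
  then show ?thesis by (induction I rule: finite_induct) (auto simp: char_zero[OF c] char_mult[OF c])
next
  case False
  then show ?thesis by (simp add: char_zero[OF c])
qed

lemma finite_characters: "finite (characters :: ('a::{ab_group_add,finite} \<Rightarrow> complex) set)"
proof -
  define S where "S = {z::complex. z ^ CARD('a) = 1}"
  have fS: "finite S" unfolding S_def by (rule finite_roots_unity) simp
  have "(characters :: ('a \<Rightarrow> complex) set) \<subseteq> PiE UNIV (\<lambda>_. S)"
    using char_pow by (auto simp: characters_def S_def PiE_def extensional_def)
  moreover have "finite (PiE (UNIV::'a set) (\<lambda>_. S))" using fS by (intro finite_PiE) auto
  ultimately show ?thesis by (rule finite_subset)
qed

lemma one_character: "(\<lambda>_. 1) \<in> characters"
  by (simp add: characters_def character_def)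

definition ncard :: "'a::{ab_group_add,finite} itself \<Rightarrow> nat" where
  "ncard _ = card (characters :: ('a \<Rightarrow> complex) set)"

lemma ncard_pos: "card (characters :: ('a::{ab_group_add,finite} \<Rightarrow> complex) set) > 0"
  using finite_characters one_character card_gt_0_iff by blast

lemma orth:
  fixes s :: "'a::{ab_group_add,finite}"
  shows "(\<Sum>\<gamma>\<in>characters. \<gamma> s) = (if s = 0 then of_nat (card (characters :: ('a \<Rightarrow> complex) set)) else 0)"
proof (cases "s = 0")
  case True
  then show ?thesis by (simp add: characters_def char_zero)
next
  case False
  obtain \<gamma>0 where g0: "character \<gamma>0" "\<gamma>0 s \<noteq> 1" using separation[OF False] by blast
  have "(\<Sum>\<gamma>\<in>characters. \<gamma> s) = (\<Sum>\<gamma>\<in>characters. \<gamma>0 s * \<gamma> s)"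
  proof (rule sum.reindex_bij_witness[of _ "\<lambda>\<gamma> x. \<gamma>0 x * \<gamma> x" "\<lambda>\<gamma> x. \<gamma> x / \<gamma>0 x"])
    fix \<gamma> :: "'a \<Rightarrow> complex" assume "\<gamma> \<in> characters"
    then have c: "character \<gamma>" by (simp add: characters_def)
    show "(\<lambda>x. \<gamma>0 x * (\<gamma> x / \<gamma>0 x)) = \<gamma>" using char_nz[OF g0(1)] by auto
    show "(\<lambda>x. \<gamma> x / \<gamma>0 x) \<in> characters"
      using c g0(1) by (auto simp: characters_def character_def)
    show "(\<lambda>x. \<gamma>0 x * \<gamma> x / \<gamma>0 x) = \<gamma>" using char_nz[OF g0(1)] by auto
    show "(\<lambda>x. \<gamma>0 x * \<gamma> x) \<in> characters"
      using c g0(1) by (auto simp: characters_def character_def)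
    show "\<gamma>0 s * (\<gamma> s / \<gamma>0 s) = \<gamma> s" using char_nz[OF g0(1)] by auto
  qed
  also have "\<dots> = \<gamma>0 s * (\<Sum>\<gamma>\<in>characters. \<gamma> s)" by (simp add: sum_distrib_left)
  finally have "(1 - \<gamma>0 s) * (\<Sum>\<gamma>\<in>characters. \<gamma> s) = 0" by (simp add: algebra_simps)
  then show ?thesis using g0(2) False by simp
qed

definition fourier :: "('a::{ab_group_add,finite} \<Rightarrow> real) \<Rightarrow> ('a \<Rightarrow> complex) \<Rightarrow> complex" where
  "fourier g \<gamma> = (\<Sum>x\<in>UNIV. complex_of_real (g x) * \<gamma> x)"

abbreviation NC where "NC \<equiv> \<lambda>(t::'a::{ab_group_add,finite} itself). card (characters :: ('a \<Rightarrow> complex) set)"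

lemma Tform_fourier:
  fixes g :: "nat \<Rightarrow> 'a::{ab_group_add,finite} \<Rightarrow> real"
  shows "complex_of_real (Tform k g) =
    (\<Sum>\<gamma>\<in>characters. \<Prod>i\<in>{1..k}. fourier (g i) \<gamma>) / of_nat (card (characters :: ('a \<Rightarrow> complex) set))"
proof -
  define P where "P = PiE {1..k} (\<lambda>_. UNIV :: 'a set)"
  have fP: "finite P" unfolding P_def by (intro finite_PiE) auto
  have "(\<Sum>\<gamma>\<in>characters. \<Prod>i\<in>{1..k}. fourier (g i) \<gamma>) =
        (\<Sum>\<gamma>\<in>characters. \<Sum>p\<in>P. complex_of_real (\<Prod>i\<in>{1..k}. g i (p i)) * \<gamma> (\<Sum>i\<in>{1..k}. p i))"
  proof (rule sum.cong[OF refl])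
    fix \<gamma> :: "'a \<Rightarrow> complex" assume "\<gamma> \<in> characters"
    then have c: "character \<gamma>" by (simp add: characters_def)
    have "(\<Prod>i\<in>{1..k}. fourier (g i) \<gamma>) = (\<Sum>p\<in>P. \<Prod>i\<in>{1..k}. complex_of_real (g i (p i)) * \<gamma> (p i))"
      unfolding fourier_def P_def by (rule prod_sum_PiE) auto
    also have "\<dots> = (\<Sum>p\<in>P. complex_of_real (\<Prod>i\<in>{1..k}. g i (p i)) * \<gamma> (\<Sum>i\<in>{1..k}. p i))"
      by (simp add: prod.distrib char_sum[OF c])
    finally show "(\<Prod>i\<in>{1..k}. fourier (g i) \<gamma>) = \<dots>" .
  qed
  also have "\<dots> = (\<Sum>p\<in>P. complex_of_real (\<Prod>i\<in>{1..k}. g i (p i)) * (\<Sum>\<gamma>\<in>characters. \<gamma> (\<Sum>i\<in>{1..k}. p i)))"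
    by (subst sum.swap) (simp add: sum_distrib_left)
  also have "\<dots> = (\<Sum>p\<in>P. complex_of_real (\<Prod>i\<in>{1..k}. g i (p i)) * (if (\<Sum>i\<in>{1..k}. p i) = 0 then of_nat (card (characters :: ('a \<Rightarrow> complex) set)) else 0))"
    by (simp only: orth)
  also have "\<dots> = (\<Sum>p\<in>{p\<in>P. (\<Sum>i\<in>{1..k}. p i) = 0}. complex_of_real (\<Prod>i\<in>{1..k}. g i (p i)) * of_nat (card (characters :: ('a \<Rightarrow> complex) set)))"
    by (subst sum.inter_filter[OF fP]) (intro sum.cong refl, simp)
  also have "\<dots> = complex_of_real (\<Sum>p\<in>{p\<in>P. (\<Sum>i\<in>{1..k}. p i) = 0}. \<Prod>i\<in>{1..k}. g i (p i)) * of_nat (card (characters :: ('a \<Rightarrow> complex) set))"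
    by (simp only: sum_distrib_right of_real_sum)
  also have "\<dots> = complex_of_real (Tform k g) * of_nat (card (characters :: ('a \<Rightarrow> complex) set))"
    by (simp add: Tform_def P_def)
  finally show ?thesis using ncard_pos[where 'a='a] by (simp add: field_simps)
qed

lemma sum3_product:
  fixes a b c :: "'b \<Rightarrow> 'c::comm_ring_1"
  shows "(\<Sum>y\<in>A. a y) * (\<Sum>z\<in>B. b z) * (\<Sum>u\<in>C. c u) = (\<Sum>y\<in>A. \<Sum>z\<in>B. \<Sum>u\<in>C. a y * b z * c u)"
proof -
  have 1: "(\<Sum>y\<in>A. a y) * (\<Sum>z\<in>B. b z) = (\<Sum>y\<in>A. \<Sum>z\<in>B. a y * b z)" by (rule sum_product)
  have "(\<Sum>y\<in>A. a y) * (\<Sum>z\<in>B. b z) * (\<Sum>u\<in>C. c u) = (\<Sum>y\<in>A. (\<Sum>z\<in>B. a y * b z) * (\<Sum>u\<in>C. c u))"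
    unfolding 1 by (rule sum_distrib_right)
  also have "\<dots> = (\<Sum>y\<in>A. \<Sum>z\<in>B. \<Sum>u\<in>C. a y * b z * c u)"
    by (intro sum.cong refl) (rule sum_product)
  finally show ?thesis .
qed

lemma neg_sum_iff: "((y::'a::ab_group_add) + z + u = 0) = (u = - (y + z))"
  by (metis add.commute add_eq_0_iff2 eq_neg_iff_add_eq_0)

lemma T3_fourier:
  fixes g h w :: "'a::{ab_group_add,finite} \<Rightarrow> real"
  shows "complex_of_real (\<Sum>y\<in>UNIV. \<Sum>z\<in>UNIV. g y * h z * w (- (y + z))) =
    (\<Sum>\<gamma>\<in>characters. fourier g \<gamma> * fourier h \<gamma> * fourier w \<gamma>) / of_nat (card (characters :: ('a \<Rightarrow> complex) set))"
proof -
  let ?M = "of_nat (card (characters :: ('a \<Rightarrow> complex) set)) :: complex"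
  have "(\<Sum>\<gamma>\<in>characters. fourier g \<gamma> * fourier h \<gamma> * fourier w \<gamma>) =
     (\<Sum>\<gamma>\<in>characters. \<Sum>y\<in>UNIV. \<Sum>z\<in>UNIV. \<Sum>u\<in>UNIV. complex_of_real (g y * h z * w u) * \<gamma> (y + z + u))"
  proof (rule sum.cong[OF refl])
    fix \<gamma> :: "'a \<Rightarrow> complex" assume "\<gamma> \<in> characters"
    then have c: "character \<gamma>" by (simp add: characters_def)
    show "fourier g \<gamma> * fourier h \<gamma> * fourier w \<gamma> = (\<Sum>y\<in>UNIV. \<Sum>z\<in>UNIV. \<Sum>u\<in>UNIV. complex_of_real (g y * h z * w u) * \<gamma> (y + z + u))"
      unfolding fourier_def sum3_product
      by (intro sum.cong refl) (simp add: char_mult[OF c] algebra_simps)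
  qed
  also have "\<dots> = (\<Sum>y\<in>UNIV. \<Sum>z\<in>UNIV. \<Sum>u\<in>UNIV. complex_of_real (g y * h z * w u) * (\<Sum>\<gamma>\<in>characters. \<gamma> (y + z + u)))"
    by (simp add: sum_distrib_left sum.swap[of _ characters])
  also have "\<dots> = (\<Sum>y\<in>UNIV. \<Sum>z\<in>UNIV. \<Sum>u\<in>UNIV. if u = - (y + z) then complex_of_real (g y * h z * w u) * ?M else 0)"
    unfolding orth neg_sum_iff by (intro sum.cong refl) auto
  also have "\<dots> = (\<Sum>y\<in>UNIV. \<Sum>z\<in>UNIV. complex_of_real (g y * h z * w (- (y + z))) * ?M)"
    by simp
  also have "\<dots> = complex_of_real (\<Sum>y\<in>UNIV. \<Sum>z\<in>UNIV. g y * h z * w (- (y + z))) * ?M"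
    by (simp add: sum_distrib_right)
  finally show ?thesis using ncard_pos[where 'a='a] by (simp add: field_simps)
qed

lemma parseval:
  fixes g :: "'a::{ab_group_add,finite} \<Rightarrow> real"
  shows "(\<Sum>\<gamma>\<in>characters. (norm (fourier g \<gamma>))\<^sup>2) = of_nat (card (characters :: ('a \<Rightarrow> complex) set)) * (\<Sum>x\<in>UNIV. (g x)\<^sup>2)"
proof -
  let ?M = "of_nat (card (characters :: ('a \<Rightarrow> complex) set)) :: complex"
  have "complex_of_real (\<Sum>\<gamma>\<in>characters. (norm (fourier g \<gamma>))\<^sup>2) = (\<Sum>\<gamma>\<in>characters. fourier g \<gamma> * cnj (fourier g \<gamma>))"
    by (simp only: of_real_sum complex_norm_square)
  also have "\<dots> = (\<Sum>\<gamma>\<in>characters. \<Sum>x\<in>UNIV. \<Sum>y\<in>UNIV. complex_of_real (g x * g y) * \<gamma> (x - y))"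
  proof (rule sum.cong[OF refl])
    fix \<gamma> :: "'a \<Rightarrow> complex" assume "\<gamma> \<in> characters"
    then have c: "character \<gamma>" by (simp add: characters_def)
    show "fourier g \<gamma> * cnj (fourier g \<gamma>) = (\<Sum>x\<in>UNIV. \<Sum>y\<in>UNIV. complex_of_real (g x * g y) * \<gamma> (x - y))"
      unfolding fourier_def sum_product cnj_sum by (simp add: char_diff[OF c] algebra_simps)
  qed
  also have "\<dots> = (\<Sum>x\<in>UNIV. \<Sum>y\<in>UNIV. complex_of_real (g x * g y) * (\<Sum>\<gamma>\<in>characters. \<gamma> (x - y)))"
    by (simp add: sum_distrib_left sum.swap[of _ characters])
  also have "\<dots> = (\<Sum>x\<in>UNIV. \<Sum>y\<in>UNIV. if y = x then complex_of_real (g x * g y) * ?M else 0)"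
    unfolding orth by (intro sum.cong refl) auto
  also have "\<dots> = complex_of_real (of_nat (card (characters :: ('a \<Rightarrow> complex) set)) * (\<Sum>x\<in>UNIV. (g x)\<^sup>2))"
    by (simp add: sum_distrib_left power2_eq_square algebra_simps)
  finally show ?thesis using of_real_eq_iff by blast
qed

lemma fourier_CS:
  fixes g h :: "'a::{ab_group_add,finite} \<Rightarrow> real"
  shows "(\<Sum>\<gamma>\<in>characters. norm (fourier g \<gamma>) * norm (fourier h \<gamma>))
     \<le> of_nat (card (characters :: ('a \<Rightarrow> complex) set)) * sqrt (\<Sum>x\<in>UNIV. (g x)\<^sup>2) * sqrt (\<Sum>x\<in>UNIV. (h x)\<^sup>2)"
proof -
  let ?M = "real (card (characters :: ('a \<Rightarrow> complex) set))"
  have "(\<Sum>\<gamma>\<in>characters. norm (fourier g \<gamma>) * norm (fourier h \<gamma>))\<^sup>2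
     \<le> (\<Sum>\<gamma>\<in>characters. (norm (fourier g \<gamma>))\<^sup>2) * (\<Sum>\<gamma>\<in>characters. (norm (fourier h \<gamma>))\<^sup>2)"
    by (rule Cauchy_Schwarz_ineq_sum)
  also have "\<dots> = (?M * (\<Sum>x\<in>UNIV. (g x)\<^sup>2)) * (?M * (\<Sum>x\<in>UNIV. (h x)\<^sup>2))"
    by (simp only: parseval)
  also have "\<dots> = (?M * sqrt (\<Sum>x\<in>UNIV. (g x)\<^sup>2) * sqrt (\<Sum>x\<in>UNIV. (h x)\<^sup>2))\<^sup>2"
  proof -
    have a: "(sqrt (\<Sum>x\<in>UNIV. (g x)\<^sup>2))\<^sup>2 = (\<Sum>x\<in>UNIV. (g x)\<^sup>2)" by (simp add: sum_nonneg)
    have b: "(sqrt (\<Sum>x\<in>UNIV. (h x)\<^sup>2))\<^sup>2 = (\<Sum>x\<in>UNIV. (h x)\<^sup>2)" by (simp add: sum_nonneg)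
    show ?thesis unfolding power_mult_distrib a b by (simp add: power2_eq_square[of ?M] mult_ac)
  qed
  finally show ?thesis
    by (rule power2_le_imp_le) (simp add: sum_nonneg)
qed

lemma fourier_conv:
  fixes f g :: "'a::{ab_group_add,finite} \<Rightarrow> real"
  assumes "\<gamma> \<in> characters"
  shows "fourier (conv f g) \<gamma> = fourier f \<gamma> * fourier g \<gamma>"
proof -
  have c: "character \<gamma>" using assms by (simp add: characters_def)
  have "fourier (conv f g) \<gamma> = (\<Sum>y\<in>UNIV. \<Sum>x\<in>UNIV. complex_of_real (f y) * complex_of_real (g (x - y)) * \<gamma> x)"
    unfolding fourier_def conv_def by (subst sum.swap) (simp add: sum_distrib_right)
  also have "\<dots> = (\<Sum>y\<in>UNIV. \<Sum>u\<in>UNIV. complex_of_real (f y) * complex_of_real (g u) * \<gamma> (y + u))"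
  proof (rule sum.cong[OF refl])
    fix y
    show "(\<Sum>x\<in>UNIV. complex_of_real (f y) * complex_of_real (g (x - y)) * \<gamma> x) =
          (\<Sum>u\<in>UNIV. complex_of_real (f y) * complex_of_real (g u) * \<gamma> (y + u))"
      by (rule sum.reindex_bij_witness[of _ "\<lambda>u. y + u" "\<lambda>x. x - y"]) auto
  qed
  also have "\<dots> = fourier f \<gamma> * fourier g \<gamma>"
    unfolding fourier_def sum_product by (simp add: char_mult[OF c] algebra_simps)
  finally show ?thesis .
qed

lemma prod_diff_le:
  fixes u v :: "nat \<Rightarrow> complex"
  assumes "finite I" "\<And>i. i \<in> I \<Longrightarrow> norm (u i) \<le> 1" "\<And>i. i \<in> I \<Longrightarrow> norm (v i) \<le> 1"
  shows "norm ((\<Prod>i\<in>I. u i) - (\<Prod>i\<in>I. v i)) \<le> (\<Sum>i\<in>I. norm (u i - v i))"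
  using assms
proof (induction I rule: finite_induct)
  case empty then show ?case by simp
next
  case (insert a I)
  have pu: "norm (\<Prod>i\<in>I. u i) \<le> 1" using insert.prems
    by (simp add: prod_norm[symmetric]) (intro prod_le_1, auto)
  have "(\<Prod>i\<in>insert a I. u i) - (\<Prod>i\<in>insert a I. v i) = (u a - v a) * (\<Prod>i\<in>I. u i) + v a * ((\<Prod>i\<in>I. u i) - (\<Prod>i\<in>I. v i))"
    using insert.hyps by (simp add: algebra_simps)
  then have "norm ((\<Prod>i\<in>insert a I. u i) - (\<Prod>i\<in>insert a I. v i)) \<le> norm (u a - v a) * norm (\<Prod>i\<in>I. u i) + norm (v a) * norm ((\<Prod>i\<in>I. u i) - (\<Prod>i\<in>I. v i))"
    by (metis norm_mult norm_triangle_ineq)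
  also have "\<dots> \<le> norm (u a - v a) * 1 + 1 * (\<Sum>i\<in>I. norm (u i - v i))"
    using insert pu by (intro add_mono mult_mono) auto
  finally show ?case using insert.hyps by simp
qed

lemma Arg_mult_le:
  assumes "w \<noteq> 0" "z \<noteq> 0"
  shows "\<bar>Arg (w * z)\<bar> \<le> \<bar>Arg w\<bar> + \<bar>Arg z\<bar>"
proof -
  define s where "s = Arg w + Arg z"
  have e: "Arg (w * z) = s + (if s \<in> {-pi<..pi} then 0 else if s > pi then -2*pi else 2*pi)"
    using Arg_times'[OF assms] by (simp add: s_def)
  have b: "\<bar>Arg (w * z)\<bar> \<le> pi" using Arg_bounded[of "w*z"] by auto
  show ?thesis
  proof (cases "s \<in> {-pi<..pi}")
    case True then show ?thesis using e by (simp add: s_def)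
  next
    case False
    then have "\<bar>s\<bar> \<ge> pi" by auto
    then show ?thesis using b unfolding s_def by linarith
  qed
qed

lemma Arg_diff_small:
  assumes "w \<noteq> 0" "u \<noteq> 0" "\<bar>Arg (w * u) - Arg u\<bar> < pi"
  shows "\<bar>Arg w\<bar> \<le> \<bar>Arg (w * u) - Arg u\<bar>"
proof -
  define s where "s = Arg w + Arg u"
  have e: "Arg (w * u) = s + (if s \<in> {-pi<..pi} then 0 else if s > pi then -2*pi else 2*pi)"
    using Arg_times'[OF assms(1,2)] by (simp add: s_def)
  have bw: "- pi < Arg w" "Arg w \<le> pi" using Arg_bounded[of w] by auto
  show ?thesis
  proof (cases "s \<in> {-pi<..pi}")
    case True then show ?thesis using e by (simp add: s_def)
  next
    case False
    show ?thesis
    proof (cases "s > pi")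
      case True
      then have "Arg (w * u) - Arg u = Arg w - 2 * pi" using e False by (simp add: s_def)
      then show ?thesis using assms(3) bw by auto
    next
      case F2: False
      then have "Arg (w * u) - Arg u = Arg w + 2 * pi" using e False by (simp add: s_def)
      then show ?thesis using assms(3) bw by auto
    qed
  qed
qed

lemma gnorm_ge:
  assumes "finite \<Gamma>" "\<gamma> \<in> \<Gamma>"
  shows "\<bar>Arg (\<gamma> x)\<bar> / (2 * pi) \<le> gnorm \<Gamma> x"
  using assms by (auto simp: gnorm_def intro!: Max_ge)

lemma gnorm_le:
  assumes "finite \<Gamma>" "t \<ge> 0" "\<And>\<gamma>. \<gamma> \<in> \<Gamma> \<Longrightarrow> \<bar>Arg (\<gamma> x)\<bar> / (2 * pi) \<le> t"
  shows "gnorm \<Gamma> x \<le> t"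
  using assms by (auto simp: gnorm_def)

lemma gnorm_nonneg: "finite \<Gamma> \<Longrightarrow> gnorm \<Gamma> x \<ge> 0"
proof (cases "\<Gamma> = {}")
  case True then show ?thesis by (simp add: gnorm_def)
next
  case False
  assume f: "finite \<Gamma>"
  then obtain \<gamma> where "\<gamma> \<in> \<Gamma>" using False by auto
  then have "\<bar>Arg (\<gamma> x)\<bar> / (2 * pi) \<le> gnorm \<Gamma> x" using gnorm_ge[OF f] by blast
  moreover have "\<bar>Arg (\<gamma> x)\<bar> / (2 * pi) \<ge> 0" by simp
  ultimately show ?thesis by linarith
qed

lemma gnorm_le_half: "finite \<Gamma> \<Longrightarrow> gnorm \<Gamma> x \<le> 1/2"
proof (rule gnorm_le)
  fix \<gamma> :: "'a \<Rightarrow> complex"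
  have "\<bar>Arg (\<gamma> x)\<bar> \<le> pi" using Arg_bounded[of "\<gamma> x"] by auto
  then show "\<bar>Arg (\<gamma> x)\<bar> / (2 * pi) \<le> 1 / 2" by (simp add: divide_le_eq)
qed auto

lemma gnorm_zero:
  assumes "finite \<Gamma>" "\<Gamma> \<subseteq> characters"
  shows "gnorm \<Gamma> 0 = 0"
proof -
  have "gnorm \<Gamma> 0 \<le> 0"
    by (rule gnorm_le) (use assms in \<open>auto simp: characters_def char_zero\<close>)
  then show ?thesis using gnorm_nonneg[OF assms(1), of 0] by linarith
qed

lemma gnorm_triangle:
  assumes "finite \<Gamma>" "\<Gamma> \<subseteq> characters"
  shows "gnorm \<Gamma> (x + y) \<le> gnorm \<Gamma> x + gnorm \<Gamma> y"
proof (rule gnorm_le[OF assms(1)])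
  show "0 \<le> gnorm \<Gamma> x + gnorm \<Gamma> y" using gnorm_nonneg[OF assms(1)] by (simp add: add_nonneg_nonneg)
  fix \<gamma> assume g: "\<gamma> \<in> \<Gamma>"
  then have c: "character \<gamma>" using assms by (auto simp: characters_def)
  have "\<bar>Arg (\<gamma> (x + y))\<bar> \<le> \<bar>Arg (\<gamma> x)\<bar> + \<bar>Arg (\<gamma> y)\<bar>"
    unfolding char_mult[OF c] by (rule Arg_mult_le) (auto simp: char_nz[OF c])
  then have "\<bar>Arg (\<gamma> (x + y))\<bar> / (2 * pi) \<le> \<bar>Arg (\<gamma> x)\<bar> / (2 * pi) + \<bar>Arg (\<gamma> y)\<bar> / (2 * pi)"
    by (simp add: add_divide_distrib[symmetric] divide_right_mono)
  also have "\<dots> \<le> gnorm \<Gamma> x + gnorm \<Gamma> y" using gnorm_ge[OF assms(1) g] by (intro add_mono)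
  finally show "\<bar>Arg (\<gamma> (x + y))\<bar> / (2 * pi) \<le> gnorm \<Gamma> x + gnorm \<Gamma> y" .
qed

lemma gnorm_neg:
  assumes "finite \<Gamma>" "\<Gamma> \<subseteq> characters"
  shows "gnorm \<Gamma> (- x) = gnorm \<Gamma> x"
proof -
  have "\<bar>Arg (\<gamma> (- x))\<bar> = \<bar>Arg (\<gamma> x)\<bar>" if "\<gamma> \<in> \<Gamma>" for \<gamma>
  proof -
    have c: "character \<gamma>" using assms that by (auto simp: characters_def)
    show ?thesis unfolding char_minus[OF c] Arg_cnj by auto
  qed
  then have "(\<lambda>\<gamma>. \<bar>Arg (\<gamma> (- x))\<bar> / (2 * pi)) ` \<Gamma> = (\<lambda>\<gamma>. \<bar>Arg (\<gamma> x)\<bar> / (2 * pi)) ` \<Gamma>"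
    by (intro image_cong) auto
  then show ?thesis by (simp add: gnorm_def)
qed

definition theta :: "('a \<Rightarrow> complex) \<Rightarrow> 'a \<Rightarrow> real" where
  "theta \<gamma> x = Arg (\<gamma> x) / (2 * pi)"

lemma gnorm_box:
  fixes n n' :: "'a::{ab_group_add,finite}"
  assumes "finite \<Gamma>" "\<Gamma> \<subseteq> characters" "0 < s" "s \<le> 1/2"
    and "\<And>\<gamma>. \<gamma> \<in> \<Gamma> \<Longrightarrow> \<lfloor>theta \<gamma> n / s\<rfloor> = \<lfloor>theta \<gamma> n' / s\<rfloor>"
  shows "gnorm \<Gamma> (n - n') \<le> s"
proof (rule gnorm_le[OF assms(1)])
  show "0 \<le> s" using assms by simp
  fix \<gamma> assume g: "\<gamma> \<in> \<Gamma>"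
  then have c: "character \<gamma>" using assms by (auto simp: characters_def)
  have fl: "\<lfloor>theta \<gamma> n / s\<rfloor> = \<lfloor>theta \<gamma> n' / s\<rfloor>" using assms(5) g .
  have "\<bar>theta \<gamma> n / s - theta \<gamma> n' / s\<bar> < 1"
    using fl by linarith
  then have d: "\<bar>theta \<gamma> n - theta \<gamma> n'\<bar> < s" using assms(3)
    by (simp add: diff_divide_distrib[symmetric] abs_divide)
  have "\<bar>Arg (\<gamma> n) - Arg (\<gamma> n')\<bar> = 2 * pi * \<bar>theta \<gamma> n - theta \<gamma> n'\<bar>"
    by (simp add: theta_def diff_divide_distrib[symmetric] abs_divide)
  also have "\<dots> < 2 * pi * s" using d by simp
  finally have d2: "\<bar>Arg (\<gamma> n) - Arg (\<gamma> n')\<bar> < 2 * pi * s" .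
  have "2 * pi * s \<le> 2 * pi * (1/2)" using assms(4) by (intro mult_left_mono) auto
  then have "\<bar>Arg (\<gamma> n) - Arg (\<gamma> n')\<bar> < pi" using d2 by linarith
  then have d3: "\<bar>Arg (\<gamma> (n - n') * \<gamma> n') - Arg (\<gamma> n')\<bar> < pi"
    using char_mult[OF c, of "n - n'" n', symmetric] by simp
  have "\<bar>Arg (\<gamma> (n - n'))\<bar> \<le> \<bar>Arg (\<gamma> (n - n') * \<gamma> n') - Arg (\<gamma> n')\<bar>"
    by (rule Arg_diff_small) (use d3 char_nz[OF c] in auto)
  also have "\<dots> = \<bar>Arg (\<gamma> n) - Arg (\<gamma> n')\<bar>" using char_mult[OF c, of "n - n'" n', symmetric] by simp
  finally show "\<bar>Arg (\<gamma> (n - n'))\<bar> / (2 * pi) \<le> s" using d2 by (simp add: divide_le_eq mult.commute)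
qed

lemma theta_floor_lower:
  assumes "0 < s" "finite \<Gamma>" "\<gamma> \<in> \<Gamma>"
  shows "s * (\<bar>real_of_int \<lfloor>theta \<gamma> n / s\<rfloor>\<bar> - 1) \<le> gnorm \<Gamma> n"
proof -
  define K where "K = \<lfloor>theta \<gamma> n / s\<rfloor>"
  have k1: "real_of_int K \<le> theta \<gamma> n / s" "theta \<gamma> n / s < real_of_int K + 1" unfolding K_def by linarith+
  have k2: "s * real_of_int K \<le> theta \<gamma> n" "theta \<gamma> n < s * (real_of_int K + 1)"
    using k1 assms(1) by (auto simp: field_simps)
  have "s * (\<bar>real_of_int K\<bar> - 1) \<le> \<bar>theta \<gamma> n\<bar>"
  proof (cases "K \<ge> 0")
    case True then show ?thesis using k2 assms(1) by (simp add: algebra_simps)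
  next
    case False
    then have "s * (real_of_int K + 1) \<le> 0" using assms(1) by (simp add: mult_nonneg_nonpos)
    then show ?thesis using k2 False assms(1) by (simp add: algebra_simps)
  qed
  also have "\<bar>theta \<gamma> n\<bar> \<le> gnorm \<Gamma> n" using gnorm_ge[OF assms(2,3)] by (simp add: theta_def abs_divide)
  finally show ?thesis by (simp add: K_def)
qed

lemma bohr_smooth_eq:
  assumes "\<delta> > 0" "gnorm \<Gamma> x \<ge> 0"
  shows "bohr_smooth \<Gamma> \<delta> x = exp (- gnorm \<Gamma> x / \<delta>)"
proof -
  define g where "g = gnorm \<Gamma> x"
  define f where "f = (\<lambda>t::real. (1/\<delta>) * exp (- t / \<delta>))"
  have hi: "(f has_integral exp (- g / \<delta>)) {g..}"
    using has_integral_mult_right[OF has_integral_exp_minus_to_infinity[of "1/\<delta>" g], of "1/\<delta>"] assms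
    by (simp add: f_def field_simps)
  have nn: "\<And>t. f t \<ge> 0" by (simp add: f_def assms less_imp_le)
  have ai: "f absolutely_integrable_on {g..}"
    using hi nn by (intro nonnegative_absolutely_integrable_1) (auto simp: integrable_on_def)
  have meas: "f \<in> borel_measurable borel" unfolding f_def by measurable
  have si: "set_integrable lborel {g..} f"
  proof -
    have m2: "(\<lambda>t. indicator {g..} t *\<^sub>R f t) \<in> borel_measurable lborel" using meas by measurable
    show ?thesis using ai integrable_completion[OF m2] unfolding set_integrable_def by simp
  qed
  have "bohr_smooth \<Gamma> \<delta> x = (LINT t:{g..}|lborel. f t)"
    unfolding bohr_smooth_def set_lebesgue_integral_def
    apply (rule Bochner_Integration.integral_cong[OF refl])
    using assms(2) by (auto simp: indicator_def bohr_def f_def g_def)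
  also have "\<dots> = integral {g..} f" using set_borel_integral_eq_integral(2)[OF si] .
  also have "\<dots> = exp (- g / \<delta>)" using hi by (rule integral_unique)
  finally show ?thesis by (simp add: g_def)
qed

definition Zs :: "('a::{ab_group_add,finite} \<Rightarrow> complex) set \<Rightarrow> real \<Rightarrow> real" where
  "Zs \<Gamma> c = (\<Sum>n\<in>UNIV. exp (- c * gnorm \<Gamma> n))"

lemma Zs_pos: "Zs \<Gamma> c > 0"
  unfolding Zs_def by (intro sum_pos) auto

definition probfun :: "('a::{ab_group_add,finite} \<Rightarrow> real) \<Rightarrow> bool" where
  "probfun p \<longleftrightarrow> (\<forall>x. p x \<ge> 0) \<and> (\<Sum>x\<in>UNIV. p x) = 1 \<and> (\<forall>x. p (- x) = p x)"

lemma sum_shift: "(\<Sum>x\<in>UNIV. f (x + a)) = (\<Sum>x\<in>(UNIV::'a::{ab_group_add,finite} set). f x)"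
  by (rule sum.reindex_bij_witness[of _ "\<lambda>x. x - a" "\<lambda>x. x + a"]) auto

lemma sum_shift2: "(\<Sum>x\<in>UNIV. f (a - x)) = (\<Sum>x\<in>(UNIV::'a::{ab_group_add,finite} set). f x)"
  by (rule sum.reindex_bij_witness[of _ "\<lambda>x. a - x" "\<lambda>x. a - x"]) auto

lemma sum_neg: "(\<Sum>x\<in>UNIV. f (- x)) = (\<Sum>x\<in>(UNIV::'a::{ab_group_add,finite} set). f x)"
  by (rule sum.reindex_bij_witness[of _ "\<lambda>x. - x" "\<lambda>x. - x"]) auto

lemma beta_eq:
  assumes "finite \<Gamma>" "\<delta> > 0"
  shows "beta \<Gamma> \<delta> x = exp (- (1/\<delta>) * gnorm \<Gamma> x) / Zs \<Gamma> (1/\<delta>)"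
  unfolding beta_def Zs_def using bohr_smooth_eq[OF assms(2) gnorm_nonneg[OF assms(1)]]
  by simp

lemma beta_prob:
  assumes "finite \<Gamma>" "\<Gamma> \<subseteq> characters" "\<delta> > 0"
  shows "probfun (beta \<Gamma> \<delta>)"
  unfolding probfun_def beta_eq[OF assms(1,3)]
  using Zs_pos[of \<Gamma> "1/\<delta>"] gnorm_neg[OF assms(1,2)]
  by (auto simp: sum_divide_distrib[symmetric] Zs_def)

lemma beta_shift:
  assumes "finite \<Gamma>" "\<Gamma> \<subseteq> characters" "\<delta> > 0"
  shows "beta \<Gamma> \<delta> (y + w) \<ge> exp (- gnorm \<Gamma> w / \<delta>) * beta \<Gamma> \<delta> y"
proof -
  have "gnorm \<Gamma> (y + w) \<le> gnorm \<Gamma> y + gnorm \<Gamma> w" by (rule gnorm_triangle[OF assms(1,2)])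
  then have t: "(1/\<delta>) * gnorm \<Gamma> (y + w) \<le> gnorm \<Gamma> w / \<delta> + (1/\<delta>) * gnorm \<Gamma> y"
    using assms(3) by (simp add: add_divide_distrib[symmetric] divide_right_mono add.commute)
  have "exp (- gnorm \<Gamma> w / \<delta>) * exp (- (1/\<delta>) * gnorm \<Gamma> y) = exp (- (gnorm \<Gamma> w / \<delta> + (1/\<delta>) * gnorm \<Gamma> y))"
    by (simp add: exp_add[symmetric])
  also have "\<dots> \<le> exp (- (1/\<delta>) * gnorm \<Gamma> (y + w))" using t by simp
  finally have "exp (- gnorm \<Gamma> w / \<delta>) * exp (- (1/\<delta>) * gnorm \<Gamma> y) \<le> exp (- (1/\<delta>) * gnorm \<Gamma> (y + w))" .
  then have "(exp (- gnorm \<Gamma> w / \<delta>) * exp (- (1/\<delta>) * gnorm \<Gamma> y)) / Zs \<Gamma> (1/\<delta>) \<le> exp (- (1/\<delta>) * gnorm \<Gamma> (y + w)) / Zs \<Gamma> (1/\<delta>)"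
    using Zs_pos[of \<Gamma> "1/\<delta>"] by (intro divide_right_mono) auto
  then show ?thesis unfolding beta_eq[OF assms(1,3)] by simp
qed

lemma conv_prob:
  assumes "probfun p" "probfun q"
  shows "probfun (conv p q)"
  unfolding probfun_def
proof (intro conjI allI)
  fix x
  show "conv p q x \<ge> 0" using assms unfolding conv_def probfun_def by (auto intro!: sum_nonneg)
next
  have "(\<Sum>x\<in>UNIV. conv p q x) = (\<Sum>y\<in>UNIV. p y * (\<Sum>x\<in>UNIV. q (x - y)))"
    unfolding conv_def by (subst sum.swap) (simp add: sum_distrib_left)
  also have "\<dots> = (\<Sum>y\<in>UNIV. p y)"
  proof -
    have "(\<Sum>x\<in>UNIV. q (x - y)) = 1" for y using assms(2) sum_shift[of q "- y"] by (simp add: probfun_def)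
    then show ?thesis by simp
  qed
  finally show "(\<Sum>x\<in>UNIV. conv p q x) = 1" using assms(1) by (simp add: probfun_def)
next
  fix x
  have "conv p q (- x) = (\<Sum>y\<in>UNIV. p (- y) * q (- x - (- y)))"
    unfolding conv_def by (rule sum_neg[symmetric])
  also have "\<dots> = conv p q x" unfolding conv_def using assms
    by (intro sum.cong refl) (metis minus_diff_eq minus_diff_minus probfun_def)
  finally show "conv p q (- x) = conv p q x" .
qed

lemma conv_shift:
  assumes "\<And>x. q x \<ge> 0" "\<And>y. p (y + w) \<ge> e * p y"
  shows "conv q p (y + w) \<ge> e * conv q p y"
  unfolding conv_def sum_distrib_left
proof (rule sum_mono)
  fix u
  have "p (y + w - u) \<ge> e * p (y - u)" using assms(2)[of "y - u"] by (simp add: algebra_simps)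
  then show "e * (q u * p (y - u)) \<le> q u * p (y + w - u)"
    using assms(1)[of u] by (metis mult.left_commute mult_left_mono)
qed

lemma psi_prob:
  assumes "finite \<Gamma>" "\<Gamma> \<subseteq> characters" "\<delta> > 0"
  shows "probfun (psi \<Gamma> \<delta>)"
proof (cases "\<Gamma> = {}")
  case True then show ?thesis by (simp add: psi_def probfun_def)
next
  case False then show ?thesis unfolding psi_def using conv_prob beta_prob[OF assms] by simp
qed

lemma psi_shift:
  assumes "finite \<Gamma>" "\<Gamma> \<subseteq> characters" "\<delta> > 0"
  shows "psi \<Gamma> \<delta> (y + w) \<ge> exp (- gnorm \<Gamma> w / \<delta>) * psi \<Gamma> \<delta> y"
proof (cases "\<Gamma> = {}")
  case True then show ?thesis by (simp add: psi_def gnorm_def)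
next
  case False then show ?thesis unfolding psi_def using beta_prob[OF assms] beta_shift[OF assms]
    by (simp add: conv_shift probfun_def)
qed

lemma L1_shift:
  fixes p :: "'a::{ab_group_add,finite} \<Rightarrow> real"
  assumes "\<And>x. p x \<ge> 0" "(\<Sum>x\<in>UNIV. p x) = 1" "\<And>y. p (y + w) \<ge> e * p y" "e \<le> 1"
  shows "(\<Sum>y\<in>UNIV. \<bar>p (y + w) - p y\<bar>) \<le> 2 * (1 - e)"
proof -
  have "\<bar>p (y + w) - p y\<bar> = (p (y + w) - p y) + 2 * max (p y - p (y + w)) 0" for y
    by (cases "p y \<le> p (y + w)") (auto simp: max_def)
  then have "(\<Sum>y\<in>UNIV. \<bar>p (y + w) - p y\<bar>) = (\<Sum>y\<in>UNIV. p (y + w)) - (\<Sum>y\<in>UNIV. p y) + 2 * (\<Sum>y\<in>UNIV. max (p y - p (y + w)) 0)"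
    by (simp add: sum.distrib sum_subtractf sum_distrib_left)
  also have "\<dots> = 2 * (\<Sum>y\<in>UNIV. max (p y - p (y + w)) 0)" using sum_shift[of p w] by simp
  also have "\<dots> \<le> 2 * (\<Sum>y\<in>UNIV. (1 - e) * p y)"
  proof -
    have "max (p y - p (y + w)) 0 \<le> (1 - e) * p y" for y
    proof -
      have "(1 - e) * p y \<ge> 0" using assms(1)[of y] assms(4) by (intro mult_nonneg_nonneg) auto
      moreover have "p y - p (y + w) \<le> (1 - e) * p y" using assms(3)[of y] by (simp add: algebra_simps)
      ultimately show ?thesis by simp
    qed
    then show ?thesis by (intro mult_left_mono sum_mono) auto
  qed
  also have "\<dots> = 2 * (1 - e)" using assms(2) by (simp add: sum_distrib_left[symmetric])
  finally show ?thesis .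
qed

definition phi :: "('a::{ab_group_add,finite} \<Rightarrow> complex) set \<Rightarrow> real \<Rightarrow> 'a \<Rightarrow> real" where
  "phi \<Gamma> \<eta> w = 1 - exp (- gnorm \<Gamma> w / \<eta>)"

lemma phi_nonneg: "finite \<Gamma> \<Longrightarrow> \<eta> > 0 \<Longrightarrow> phi \<Gamma> \<eta> w \<ge> 0"
  unfolding phi_def using gnorm_nonneg[of \<Gamma> w] by (simp add: divide_nonneg_pos)

lemma phi_le1: "phi \<Gamma> \<eta> w \<le> 1" unfolding phi_def by simp

lemma phi_sub:
  assumes "finite \<Gamma>" "\<Gamma> \<subseteq> characters" "\<eta> > 0"
  shows "phi \<Gamma> \<eta> (u + w) \<le> phi \<Gamma> \<eta> u + phi \<Gamma> \<eta> w"
proof -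
  define a where "a = exp (- gnorm \<Gamma> u / \<eta>)"
  define b where "b = exp (- gnorm \<Gamma> w / \<eta>)"
  have ab: "a \<le> 1" "b \<le> 1" "a \<ge> 0" "b \<ge> 0"
    using gnorm_nonneg[OF assms(1)] assms(3) by (auto simp: a_def b_def divide_nonneg_pos)
  have "gnorm \<Gamma> (u + w) \<le> gnorm \<Gamma> u + gnorm \<Gamma> w" by (rule gnorm_triangle[OF assms(1,2)])
  then have t: "gnorm \<Gamma> (u + w) / \<eta> \<le> gnorm \<Gamma> u / \<eta> + gnorm \<Gamma> w / \<eta>"
    using assms(3) by (simp add: add_divide_distrib[symmetric] divide_right_mono)
  have "a * b = exp (- (gnorm \<Gamma> u / \<eta> + gnorm \<Gamma> w / \<eta>))" by (simp add: a_def b_def exp_add[symmetric])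
  also have "\<dots> \<le> exp (- gnorm \<Gamma> (u + w) / \<eta>)" using t by simp
  finally have "a * b \<le> exp (- gnorm \<Gamma> (u + w) / \<eta>)" .
  moreover have "1 - a * b \<le> (1 - a) + (1 - b)"
  proof -
    have "(1 - a) * (1 - b) \<ge> 0" using ab by (intro mult_nonneg_nonneg) auto
    moreover have "(1 - a) * (1 - b) = 1 - a - b + a * b" by (simp add: algebra_simps)
    ultimately show ?thesis by linarith
  qed
  ultimately show ?thesis unfolding phi_def a_def b_def by linarith
qed

definition expect :: "('a::{ab_group_add,finite} \<Rightarrow> real) \<Rightarrow> ('a \<Rightarrow> real) \<Rightarrow> real" where
  "expect p f = (\<Sum>w\<in>UNIV. p w * f w)"

lemma expect_conv:
  assumes "\<And>x. p x \<ge> 0" "\<And>x. q x \<ge> 0" "(\<Sum>x\<in>UNIV. p x) = 1" "(\<Sum>x\<in>UNIV. q x) = 1"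
    and "\<And>u w. f (u + w) \<le> f u + f w"
  shows "expect (conv p q) f \<le> expect p f + expect q f"
proof -
  have "expect (conv p q) f = (\<Sum>u\<in>UNIV. \<Sum>v\<in>UNIV. p u * q (v - u) * f v)"
    unfolding expect_def conv_def by (subst sum.swap) (simp add: sum_distrib_right)
  also have "\<dots> = (\<Sum>u\<in>UNIV. \<Sum>t\<in>UNIV. p u * q t * f (u + t))"
  proof (rule sum.cong[OF refl])
    fix u
    show "(\<Sum>v\<in>UNIV. p u * q (v - u) * f v) = (\<Sum>t\<in>UNIV. p u * q t * f (u + t))"
      by (rule sum.reindex_bij_witness[of _ "\<lambda>t. u + t" "\<lambda>v. v - u"]) auto
  qed
  also have "\<dots> \<le> (\<Sum>u\<in>UNIV. \<Sum>t\<in>UNIV. p u * q t * (f u + f t))"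
    using assms by (intro sum_mono mult_left_mono) auto
  also have "\<dots> = (\<Sum>u\<in>UNIV. p u * f u * (\<Sum>t\<in>UNIV. q t)) + (\<Sum>u\<in>UNIV. p u * (\<Sum>t\<in>UNIV. q t * f t))"
    by (simp add: algebra_simps sum.distrib sum_distrib_left sum_distrib_right)
  also have "\<dots> = expect p f + expect q f"
    using assms(3,4) by (simp add: expect_def sum_distrib_right[symmetric])
  finally show ?thesis .
qed

primrec psipow :: "('a::{ab_group_add,finite} \<Rightarrow> real) \<Rightarrow> nat \<Rightarrow> 'a \<Rightarrow> real" where
  "psipow p 0 = (\<lambda>w. if w = 0 then 1 else 0)"
| "psipow p (Suc j) = conv (psipow p j) p"

lemma psipow_props:
  assumes "\<And>x. p x \<ge> 0" "(\<Sum>x\<in>UNIV. p x) = 1"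
  shows "(\<forall>x. psipow p j x \<ge> 0) \<and> (\<Sum>x\<in>UNIV. psipow p j x) = 1"
proof (induction j)
  case 0 then show ?case by simp
next
  case (Suc j)
  have "(\<Sum>x\<in>UNIV. conv (psipow p j) p x) = (\<Sum>y\<in>UNIV. psipow p j y * (\<Sum>x\<in>UNIV. p (x - y)))"
    unfolding conv_def by (subst sum.swap) (simp add: sum_distrib_left)
  also have "\<dots> = 1"
  proof -
    have "(\<Sum>x\<in>UNIV. p (x - y)) = 1" for y using assms(2) sum_shift[of p "- y"] by simp
    then show ?thesis using Suc by simp
  qed
  finally show ?case using Suc assms(1) by (auto simp: conv_def intro!: sum_nonneg)
qed

lemma psipow_expect:
  assumes "\<And>x. p x \<ge> 0" "(\<Sum>x\<in>UNIV. p x) = 1"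
    and "\<And>u w. f (u + w) \<le> f u + f w" "f 0 = 0"
  shows "expect (psipow p j) f \<le> real j * expect p f"
proof (induction j)
  case 0
  have "expect (psipow p 0) f = (\<Sum>w\<in>UNIV. if w = 0 then f w else 0)"
    unfolding expect_def by (intro sum.cong refl) auto
  also have "\<dots> = 0" using assms(4) by simp
  finally show ?case by simp
next
  case (Suc j)
  have pp: "\<forall>x. psipow p j x \<ge> 0" "(\<Sum>x\<in>UNIV. psipow p j x) = 1" using psipow_props[OF assms(1,2), of j] by auto
  have "expect (psipow p (Suc j)) f \<le> expect (psipow p j) f + expect p f"
    unfolding psipow.simps by (rule expect_conv) (use pp assms in auto)
  then show ?case using Suc by (simp add: algebra_simps)
qed

lemma psipow_fourier:
  assumes "\<gamma> \<in> characters"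
  shows "fourier (psipow p j) \<gamma> = (fourier p \<gamma>) ^ j"
proof (induction j)
  case 0
  have "fourier (psipow p 0) \<gamma> = (\<Sum>x\<in>UNIV. if x = 0 then \<gamma> x else 0)"
    unfolding fourier_def by (intro sum.cong refl) auto
  then have "fourier (psipow p 0) \<gamma> = \<gamma> 0" by simp
  then show ?case using assms by (simp add: characters_def char_zero)
next
  case (Suc j) then show ?case by (simp add: fourier_conv[OF assms])
qed

definition Zt :: "('a::finite \<Rightarrow> real) \<Rightarrow> real \<Rightarrow> real" where
  "Zt t c = (\<Sum>n\<in>UNIV. exp (- c * t n))"

lemma Zt_pos: "Zt t c > 0" unfolding Zt_def by (intro sum_pos) auto

lemma Zt_CS: "(Zt t c)\<^sup>2 \<le> Zt t (c - h) * Zt t (c + h)"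
proof -
  have "(Zt t c)\<^sup>2 = (\<Sum>n\<in>UNIV. exp (- (c - h) * t n / 2) * exp (- (c + h) * t n / 2))\<^sup>2"
    unfolding Zt_def by (simp add: exp_add[symmetric] algebra_simps add_divide_distrib[symmetric])
  also have "\<dots> \<le> (\<Sum>n\<in>UNIV. (exp (- (c - h) * t n / 2))\<^sup>2) * (\<Sum>n\<in>UNIV. (exp (- (c + h) * t n / 2))\<^sup>2)"
    by (rule Cauchy_Schwarz_ineq_sum)
  also have "\<dots> = Zt t (c - h) * Zt t (c + h)"
    unfolding Zt_def by (simp add: exp_double[symmetric] power2_eq_square exp_add[symmetric] mult.commute)
  finally show ?thesis .
qed

lemma Zt_mono: "(\<And>n. t n \<ge> 0) \<Longrightarrow> c1 \<le> c2 \<Longrightarrow> Zt t c2 \<le> Zt t c1"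
  unfolding Zt_def by (intro sum_mono) (simp add: mult_right_mono)

lemma Zt_ratio_mono: "Zt t c / Zt t (c - h) \<le> Zt t (c + h) / Zt t c"
proof -
  have "Zt t c * Zt t c \<le> Zt t (c + h) * Zt t (c - h)" using Zt_CS[of t c h] by (simp add: power2_eq_square mult.commute)
  then show ?thesis using Zt_pos[of t] by (simp add: divide_simps)
qed

lemma Zt_ratio_iter:
  "Zt t (lam - real j * \<mu> + \<mu>) / Zt t (lam - real j * \<mu>) \<le> Zt t (lam + \<mu>) / Zt t lam"
proof (induction j)
  case 0 then show ?case by simp
next
  case (Suc j)
  have "Zt t (lam - real (Suc j) * \<mu> + \<mu>) / Zt t (lam - real (Suc j) * \<mu>)
      = Zt t (lam - real j * \<mu>) / Zt t ((lam - real j * \<mu>) - \<mu>)" by (simp add: algebra_simps)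
  also have "\<dots> \<le> Zt t (lam - real j * \<mu> + \<mu>) / Zt t (lam - real j * \<mu>)" by (rule Zt_ratio_mono)
  finally show ?case using Suc by linarith
qed

lemma Zt_telescope:
  "Zt t lam \<le> (Zt t (lam + \<mu>) / Zt t lam) ^ m * Zt t (lam - real m * \<mu>)"
proof (induction m)
  case 0 then show ?case by simp
next
  case (Suc m)
  define r where "r = Zt t (lam + \<mu>) / Zt t lam"
  have r0: "r \<ge> 0" using Zt_pos[of t] by (simp add: r_def less_imp_le)
  have "Zt t (lam - real m * \<mu>) = (Zt t (lam - real (Suc m) * \<mu> + \<mu>) / Zt t (lam - real (Suc m) * \<mu>)) * Zt t (lam - real (Suc m) * \<mu>)"
  proof -
    have e: "lam - real (Suc m) * \<mu> + \<mu> = lam - real m * \<mu>" by (simp add: algebra_simps)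
    have "Zt t (lam - real (Suc m) * \<mu>) \<noteq> 0" using Zt_pos[of t "lam - real (Suc m) * \<mu>"] by simp
    then show ?thesis by (simp only: e) simp
  qed
  also have "\<dots> \<le> r * Zt t (lam - real (Suc m) * \<mu>)"
    unfolding r_def using Zt_ratio_iter[of t lam "Suc m" \<mu>] Zt_pos[of t "lam - real (Suc m) * \<mu>"]
    by (intro mult_right_mono) (auto simp del: of_nat_Suc)
  finally have "Zt t (lam - real m * \<mu>) \<le> r * Zt t (lam - real (Suc m) * \<mu>)" .
  then have "r ^ m * Zt t (lam - real m * \<mu>) \<le> r ^ m * (r * Zt t (lam - real (Suc m) * \<mu>))"
    using r0 by (intro mult_left_mono) auto
  moreover have "r ^ m * (r * Zt t (lam - real (Suc m) * \<mu>)) = r ^ Suc m * Zt t (lam - real (Suc m) * \<mu>)"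
    by (simp add: mult_ac)
  ultimately show ?case using Suc unfolding r_def[symmetric] by linarith
qed

lemma Zt_logconv:
  assumes t0: "\<And>n. t n \<ge> 0" and "\<mu> > 0" "m \<ge> 1" "real m * \<mu> \<le> lam / 2"
    and K: "Zt t (lam / 2) \<le> K * Zt t lam" "K > 0"
  shows "Zt t (lam + \<mu>) / Zt t lam \<ge> 1 - ln K / real m"
proof -
  define r where "r = Zt t (lam + \<mu>) / Zt t lam"
  have r0: "r > 0" using Zt_pos[of t] by (simp add: r_def)
  have "Zt t lam \<le> r ^ m * Zt t (lam - real m * \<mu>)" unfolding r_def by (rule Zt_telescope)
  also have "\<dots> \<le> r ^ m * Zt t (lam / 2)"
    using assms(4) r0 by (intro mult_left_mono Zt_mono t0) auto
  also have "\<dots> \<le> r ^ m * (K * Zt t lam)" using K r0 by (intro mult_left_mono) auto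
  finally have "1 * Zt t lam \<le> (r ^ m * K) * Zt t lam" by (simp add: mult.assoc)
  then have "1 \<le> r ^ m * K" using Zt_pos[of t lam] by (simp only: mult_le_cancel_right)
  then have "0 \<le> ln (r ^ m * K)" using r0 K(2) by simp
  then have "0 \<le> real m * ln r + ln K" using r0 K(2) by (simp add: ln_mult ln_realpow)
  then have "- ln K / real m \<le> ln r" using assms(3) by (simp add: divide_simps) (simp add: algebra_simps)
  then have "exp (- ln K / real m) \<le> r" using r0 by (metis exp_le_cancel_iff exp_ln)
  moreover have "1 + (- ln K / real m) \<le> exp (- ln K / real m)" by (rule exp_ge_add_one_self)
  ultimately show ?thesis unfolding r_def by simp
qed

lemma e_ge2: "exp (1::real) \<ge> 2" using exp_ge_add_one_self[of "1::real"] by simp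

lemma geo_bound: "(\<Sum>j\<in>{- int M..int M}. exp (- \<bar>real_of_int j\<bar>)) \<le> 3 - 2 * exp (- real M)"
proof (induction M)
  case 0 then show ?case by simp
next
  case (Suc M)
  have set: "{- int (Suc M)..int (Suc M)} = insert (- int (Suc M)) (insert (int (Suc M)) {- int M..int M})" by auto
  have "(\<Sum>j\<in>{- int (Suc M)..int (Suc M)}. exp (- \<bar>real_of_int j\<bar>)) = (\<Sum>j\<in>{- int M..int M}. exp (- \<bar>real_of_int j\<bar>)) + 2 * exp (- real (Suc M))"
    unfolding set by (subst sum.insert; simp)+
  also have "\<dots> \<le> 3 - 2 * exp (- real M) + 2 * exp (- real (Suc M))" using Suc by simp
  also have "\<dots> \<le> 3 - 2 * exp (- real (Suc M))"
  proof -
    have "exp (- real M) = exp 1 * exp (- real (Suc M))" by (simp add: exp_add[symmetric])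
    then have "exp (- real M) \<ge> 2 * exp (- real (Suc M))" using e_ge2 by (simp add: mult_right_mono)
    then show ?thesis by simp
  qed
  finally show ?case .
qed

lemma geo_bound3: "(\<Sum>j\<in>{- int M..int M}. exp (- \<bar>real_of_int j\<bar>)) \<le> 3"
  using geo_bound[of M] by (smt (verit) exp_gt_zero)

lemma box_lemma:
  fixes \<Gamma> :: "('a::{ab_group_add,finite} \<Rightarrow> complex) set"
  assumes fin: "finite \<Gamma>" and ch: "\<Gamma> \<subseteq> characters" and ne: "\<Gamma> \<noteq> {}" and lam: "lam > 0"
  shows "Zs \<Gamma> (lam / 2) \<le> (4 * exp 3) ^ card \<Gamma> * Zs \<Gamma> lam"
proof -
  define d where "d = real (card \<Gamma>)"
  have "card \<Gamma> > 0" using fin ne by (simp add: card_gt_0_iff)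
  then have d1: "d \<ge> 1" by (simp add: d_def)
  define s where "s = 2 * d / lam"
  have s0: "s > 0" using d1 lam by (simp add: s_def)
  have lam_s: "lam * s = 2 * d" using lam by (simp add: s_def)
  have g0: "\<And>n. gnorm \<Gamma> n \<ge> 0" using gnorm_nonneg[OF fin] by blast
  have gh: "\<And>n. gnorm \<Gamma> n \<le> 1/2" using gnorm_le_half[OF fin] by blast
  have bigK: "exp (3 * d) * 3 ^ card \<Gamma> \<le> (4 * exp 3) ^ card \<Gamma>"
  proof -
    have "(4 * exp 3) ^ card \<Gamma> = 4 ^ card \<Gamma> * exp (3 * d)"
      by (simp add: power_mult_distrib d_def exp_of_nat_mult[symmetric] mult.commute)
    moreover have "(3::real) ^ card \<Gamma> \<le> 4 ^ card \<Gamma>" by (intro power_mono) auto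
    ultimately show ?thesis by (simp add: mult.commute)
  qed
  show ?thesis
  proof (cases "s \<ge> 1/2")
    case True
    then have "lam \<le> 4 * d" using lam d1 by (simp add: s_def field_simps)
    have "Zs \<Gamma> (lam / 2) \<le> (\<Sum>n\<in>(UNIV::'a set). 1)"
      unfolding Zs_def using g0 lam by (intro sum_mono) (simp add: mult_nonneg_nonneg)
    also have "\<dots> = exp (2 * d) * (\<Sum>n\<in>(UNIV::'a set). exp (- 2 * d))" by (simp add: exp_minus field_simps)
    also have "\<dots> \<le> exp (2 * d) * Zs \<Gamma> lam"
    proof -
      have "exp (- 2 * d) \<le> exp (- lam * gnorm \<Gamma> n)" for n
      proof -
        have "lam * gnorm \<Gamma> n \<le> lam * (1/2)" using gh[of n] lam by (intro mult_left_mono) auto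
        then show ?thesis using \<open>lam \<le> 4 * d\<close> by simp
      qed
      then show ?thesis unfolding Zs_def by (intro mult_left_mono sum_mono) auto
    qed
    also have "\<dots> \<le> (4 * exp 3) ^ card \<Gamma> * Zs \<Gamma> lam"
    proof -
      have "exp (2 * d) \<le> exp (3 * d) * 3 ^ card \<Gamma>"
      proof -
        have "exp (2 * d) \<le> exp (3 * d)" using d1 by simp
        also have "\<dots> \<le> exp (3 * d) * 3 ^ card \<Gamma>" by simp
        finally show ?thesis .
      qed
      then show ?thesis using bigK Zs_pos[of \<Gamma> lam] by (intro mult_right_mono) auto
    qed
    finally show ?thesis .
  next
    case False
    then have sh: "s \<le> 1/2" by simp
    define box where "box n = restrict (\<lambda>\<gamma>. \<lfloor>theta \<gamma> n / s\<rfloor>) \<Gamma>" for n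
    define Bs where "Bs = {n::'a. gnorm \<Gamma> n \<le> s}"
    define M where "M = nat (\<lceil>1 / s\<rceil> + 1)"
    define P where "P K = (\<Prod>\<gamma>\<in>\<Gamma>. exp (- \<bar>real_of_int (K \<gamma>)\<bar>))" for K :: "('a \<Rightarrow> complex) \<Rightarrow> int"
    have P0: "P K \<ge> 0" for K unfolding P_def by (intro prod_nonneg) auto
    have F1: "card {n. box n = K} \<le> card Bs" for K
    proof (cases "{n. box n = K} = {}")
      case True then show ?thesis by simp
    next
      case False
      then obtain n0 where n0: "box n0 = K" by auto
      have "inj_on (\<lambda>n. n - n0) {n. box n = K}" by (auto simp: inj_on_def)
      moreover have "(\<lambda>n. n - n0) ` {n. box n = K} \<subseteq> Bs"
      proof
        fix y assume "y \<in> (\<lambda>n. n - n0) ` {n. box n = K}"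
        then obtain n where n: "box n = K" "y = n - n0" by auto
        have "\<lfloor>theta \<gamma> n / s\<rfloor> = \<lfloor>theta \<gamma> n0 / s\<rfloor>" if "\<gamma> \<in> \<Gamma>" for \<gamma>
          using n(1) n0 that unfolding box_def by (metis restrict_apply')
        then have "gnorm \<Gamma> (n - n0) \<le> s" by (intro gnorm_box[OF fin ch s0 sh]) auto
        then show "y \<in> Bs" using n by (simp add: Bs_def)
      qed
      ultimately show ?thesis by (intro card_inj_on_le) auto
    qed
    have F2: "exp (- (lam / 2) * gnorm \<Gamma> n) \<le> exp d * P (box n)" for n
    proof -
      have "s * (\<bar>real_of_int (box n \<gamma>)\<bar> - 1) \<le> gnorm \<Gamma> n" if "\<gamma> \<in> \<Gamma>" for \<gamma>
        using theta_floor_lower[OF s0 fin that, of n] that by (simp add: box_def)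
      then have "(\<Sum>\<gamma>\<in>\<Gamma>. s * (\<bar>real_of_int (box n \<gamma>)\<bar> - 1)) \<le> (\<Sum>\<gamma>\<in>\<Gamma>. gnorm \<Gamma> n)"
        by (intro sum_mono) auto
      then have "s * ((\<Sum>\<gamma>\<in>\<Gamma>. \<bar>real_of_int (box n \<gamma>)\<bar>) - d) \<le> d * gnorm \<Gamma> n"
        by (simp add: sum_distrib_left[symmetric] sum_subtractf d_def)
      then have "lam / 2 * (s * ((\<Sum>\<gamma>\<in>\<Gamma>. \<bar>real_of_int (box n \<gamma>)\<bar>) - d)) \<le> lam / 2 * (d * gnorm \<Gamma> n)"
        using lam by (intro mult_left_mono) auto
      moreover have e: "lam / 2 * (s * X) = d * X" for X
      proof -
        have "lam / 2 * (s * X) = (lam * s) * X / 2" by simp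
        then show ?thesis using lam_s by simp
      qed
      moreover have "lam / 2 * (d * gnorm \<Gamma> n) = d * (lam / 2 * gnorm \<Gamma> n)" by simp
      ultimately have "d * ((\<Sum>\<gamma>\<in>\<Gamma>. \<bar>real_of_int (box n \<gamma>)\<bar>) - d) \<le> d * (lam / 2 * gnorm \<Gamma> n)"
        by metis
      then have "(\<Sum>\<gamma>\<in>\<Gamma>. \<bar>real_of_int (box n \<gamma>)\<bar>) - d \<le> lam / 2 * gnorm \<Gamma> n"
        using d1 by (simp add: mult_le_cancel_left)
      then have "exp (- (lam / 2) * gnorm \<Gamma> n) \<le> exp (d + - (\<Sum>\<gamma>\<in>\<Gamma>. \<bar>real_of_int (box n \<gamma>)\<bar>))" by simp
      also have "\<dots> = exp d * P (box n)"
        unfolding exp_add P_def by (simp add: exp_sum[OF fin, symmetric] sum_negf)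
      finally show ?thesis .
    qed
    have F3: "box ` UNIV \<subseteq> PiE \<Gamma> (\<lambda>_. {- int M..int M})"
    proof
      fix K assume "K \<in> box ` UNIV"
      then obtain n where n: "K = box n" by auto
      have "\<lfloor>theta \<gamma> n / s\<rfloor> \<in> {- int M..int M}" for \<gamma>
      proof -
        have th: "\<bar>theta \<gamma> n\<bar> \<le> 1/2" using Arg_bounded[of "\<gamma> n"] by (auto simp: theta_def abs_le_iff divide_le_eq)
        have a: "\<bar>theta \<gamma> n / s\<bar> \<le> 1 / s"
          using th s0 by (simp add: abs_divide divide_right_mono)
        have b: "1 / s \<le> real_of_int \<lceil>1 / s\<rceil>" by simp
        have c: "int M = \<lceil>1 / s\<rceil> + 1"
        proof -
          have "1 / s > 0" using s0 by simp
          then have "- 1 < 1 / s" by linarith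
          then have "0 \<le> \<lceil>1 / s\<rceil>" by (simp only: zero_le_ceiling)
          then show ?thesis by (simp add: M_def)
        qed
        have c2: "real_of_int (int M) = real_of_int \<lceil>1 / s\<rceil> + 1" using c by simp
        have r1: "- real_of_int (int M) \<le> theta \<gamma> n / s" "theta \<gamma> n / s < real_of_int (int M) + 1"
          using abs_le_D1[OF a] abs_le_D2[OF a] b c2 by linarith+
        have "- int M \<le> \<lfloor>theta \<gamma> n / s\<rfloor>" using r1(1) by (simp add: le_floor_iff)
        moreover have "\<lfloor>theta \<gamma> n / s\<rfloor> \<le> int M" using r1(2) by (simp add: floor_le_iff)
        ultimately show ?thesis by simp
      qed
      then show "K \<in> PiE \<Gamma> (\<lambda>_. {- int M..int M})" unfolding n box_def by auto
    qed
    have F4: "(\<Sum>K\<in>PiE \<Gamma> (\<lambda>_. {- int M..int M}). P K) \<le> 3 ^ card \<Gamma>"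
    proof -
      have "(\<Sum>K\<in>PiE \<Gamma> (\<lambda>_. {- int M..int M}). P K) = (\<Prod>\<gamma>\<in>\<Gamma>. \<Sum>j\<in>{- int M..int M}. exp (- \<bar>real_of_int j\<bar>))"
        unfolding P_def by (rule prod_sum_PiE[symmetric]) (use fin in auto)
      also have "\<dots> \<le> (\<Prod>\<gamma>\<in>\<Gamma>. 3)" by (intro prod_mono) (auto intro: sum_nonneg geo_bound3)
      finally show ?thesis by simp
    qed
    have "Zs \<Gamma> (lam / 2) \<le> (\<Sum>n\<in>UNIV. exp d * P (box n))"
      unfolding Zs_def using F2 by (intro sum_mono) auto
    also have "\<dots> = exp d * (\<Sum>K\<in>box ` UNIV. \<Sum>n\<in>{n. box n = K}. P K)"
      by (simp add: sum_distrib_left[symmetric] sum.image_gen[of UNIV _ box])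
    also have "\<dots> = exp d * (\<Sum>K\<in>box ` UNIV. real (card {n. box n = K}) * P K)" by simp
    also have "\<dots> \<le> exp d * (\<Sum>K\<in>box ` UNIV. real (card Bs) * P K)"
      using F1 P0 by (intro mult_left_mono sum_mono mult_right_mono) auto
    also have "\<dots> \<le> exp d * (\<Sum>K\<in>PiE \<Gamma> (\<lambda>_. {- int M..int M}). real (card Bs) * P K)"
      using F3 P0 fin by (intro mult_left_mono sum_mono2 finite_PiE) (auto intro: mult_nonneg_nonneg)
    also have "\<dots> \<le> exp d * (real (card Bs) * 3 ^ card \<Gamma>)"
      using F4 by (simp add: sum_distrib_left[symmetric] mult_left_mono)
    finally have up: "Zs \<Gamma> (lam / 2) \<le> exp d * (real (card Bs) * 3 ^ card \<Gamma>)" .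
    have "real (card Bs) * exp (- 2 * d) \<le> (\<Sum>n\<in>Bs. exp (- lam * gnorm \<Gamma> n))"
    proof -
      have "exp (- 2 * d) \<le> exp (- lam * gnorm \<Gamma> n)" if "n \<in> Bs" for n
      proof -
        have "lam * gnorm \<Gamma> n \<le> lam * s" using that lam by (intro mult_left_mono) (auto simp: Bs_def)
        then show ?thesis using lam_s by simp
      qed
      then show ?thesis using sum_mono[of Bs "\<lambda>_. exp (- 2 * d)"] by simp
    qed
    also have "\<dots> \<le> Zs \<Gamma> lam" unfolding Zs_def by (intro sum_mono2) auto
    finally have low: "real (card Bs) * exp (- 2 * d) \<le> Zs \<Gamma> lam" .
    have "exp d * (real (card Bs) * 3 ^ card \<Gamma>) = exp (3 * d) * 3 ^ card \<Gamma> * (real (card Bs) * exp (- 2 * d))"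
      by (simp add: exp_add[symmetric] algebra_simps)
    also have "\<dots> \<le> exp (3 * d) * 3 ^ card \<Gamma> * Zs \<Gamma> lam" using low by (intro mult_left_mono) auto
    also have "\<dots> \<le> (4 * exp 3) ^ card \<Gamma> * Zs \<Gamma> lam" using bigK Zs_pos[of \<Gamma> lam] by (intro mult_right_mono) auto
    finally show ?thesis using up by linarith
  qed
qed

lemma sqrt_diff_le: "a \<ge> 0 \<Longrightarrow> b \<ge> 0 \<Longrightarrow> sqrt b * \<bar>sqrt a - sqrt b\<bar> \<le> \<bar>a - b\<bar>"
proof -
  assume ab: "a \<ge> 0" "b \<ge> 0"
  have "\<bar>a - b\<bar> = \<bar>sqrt a - sqrt b\<bar> * (sqrt a + sqrt b)"
  proof -
    have "a - b = (sqrt a - sqrt b) * (sqrt a + sqrt b)" using ab by (simp add: algebra_simps)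
    moreover have "sqrt a + sqrt b \<ge> 0" using ab by simp
    ultimately show ?thesis by (simp add: abs_mult)
  qed
  moreover have "sqrt b * \<bar>sqrt a - sqrt b\<bar> \<le> (sqrt a + sqrt b) * \<bar>sqrt a - sqrt b\<bar>"
    using ab by (intro mult_right_mono) auto
  then have "sqrt b * \<bar>sqrt a - sqrt b\<bar> \<le> \<bar>sqrt a - sqrt b\<bar> * (sqrt a + sqrt b)" by (simp add: mult.commute)
  ultimately show ?thesis by simp
qed

lemma weighted_CS:
  fixes p v :: "'a::finite \<Rightarrow> real"
  assumes "\<And>x. p x \<ge> 0" "(\<Sum>x\<in>UNIV. p x) = 1" "(\<Sum>x\<in>UNIV. (v x)\<^sup>2 * p x) \<le> e\<^sup>2" "e \<ge> 0"
  shows "(\<Sum>x\<in>UNIV. p x * \<bar>v x\<bar>) \<le> e"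
proof -
  have "(\<Sum>x\<in>UNIV. sqrt (p x) * (sqrt (p x) * \<bar>v x\<bar>))\<^sup>2 \<le> (\<Sum>x\<in>UNIV. (sqrt (p x))\<^sup>2) * (\<Sum>x\<in>UNIV. (sqrt (p x) * \<bar>v x\<bar>)\<^sup>2)"
    by (rule Cauchy_Schwarz_ineq_sum)
  also have "\<dots> = (\<Sum>x\<in>UNIV. (v x)\<^sup>2 * p x)" using assms(1,2) by (simp add: power_mult_distrib mult.commute)
  also have "\<dots> \<le> e\<^sup>2" by (rule assms(3))
  finally have "(\<Sum>x\<in>UNIV. p x * \<bar>v x\<bar>)\<^sup>2 \<le> e\<^sup>2"
    using assms(1) by (simp add: mult.assoc[symmetric])
  then show ?thesis using assms(4) by (rule power2_le_imp_le)
qed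

lemma lemmaC:
  fixes p1 p2 f1 fk \<phi> :: "'a::{ab_group_add,finite} \<Rightarrow> real"
  assumes p1: "\<And>x. p1 x \<ge> 0" "(\<Sum>x\<in>UNIV. p1 x) = 1" "\<And>x. p1 (- x) = p1 x"
    and p1s: "\<And>w. (\<Sum>y\<in>UNIV. \<bar>p1 (y + w) - p1 y\<bar>) \<le> 2 * \<phi> w"
    and p2: "\<And>x. p2 x \<ge> 0" "(\<Sum>x\<in>UNIV. p2 x) = 1"
    and f: "\<And>x. 0 \<le> f1 x" "\<And>x. f1 x \<le> 1" "\<And>x. 0 \<le> fk x" "\<And>x. fk x \<le> 1"
    and cond: "(\<Sum>u\<in>UNIV. ((\<Sum>z\<in>UNIV. fk z * p2 (u - z)) - (\<Sum>z\<in>UNIV. fk z * p1 z))\<^sup>2 * p1 u) \<le> \<epsilon>\<^sup>2"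
    and e0: "\<epsilon> \<ge> 0"
  shows "\<bar>(\<Sum>y\<in>UNIV. \<Sum>z\<in>UNIV. (f1 y * sqrt (p1 y)) * (fk z * sqrt (p1 z)) * psipow p2 (Suc j) (- (y + z)))
          - (\<Sum>y\<in>UNIV. f1 y * p1 y) * (\<Sum>z\<in>UNIV. fk z * p1 z)\<bar>
         \<le> \<epsilon> + 2 * expect (psipow p2 (Suc j)) \<phi> + 2 * expect (psipow p2 j) \<phi>"
proof -
  define \<Psi> where "\<Psi> = psipow p2 (Suc j)"
  define \<Psi>' where "\<Psi>' = psipow p2 j"
  define ak where "ak = (\<Sum>z\<in>UNIV. fk z * p1 z)"
  define a1 where "a1 = (\<Sum>y\<in>UNIV. f1 y * p1 y)"
  define F where "F u = (\<Sum>z\<in>UNIV. fk z * p2 (u - z))" for u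
  define H where "H y = (\<Sum>z\<in>UNIV. fk z * \<Psi> (- (y + z)))" for y
  have Psi: "\<And>x. \<Psi> x \<ge> 0" "(\<Sum>x\<in>UNIV. \<Psi> x) = 1" using psipow_props[OF p2, of "Suc j"] by (auto simp: \<Psi>_def)
  have Psi': "\<And>x. \<Psi>' x \<ge> 0" "(\<Sum>x\<in>UNIV. \<Psi>' x) = 1" using psipow_props[OF p2, of j] by (auto simp: \<Psi>'_def)
  have p1sym: "p1 (- y - w) = p1 (y + w)" for y w
  proof -
    have "- y - w = - (y + w)" by simp
    then show ?thesis using p1(3)[of "y + w"] by simp
  qed
  have F01: "0 \<le> F u \<and> F u \<le> 1" for u
  proof -
    have "F u \<le> (\<Sum>z\<in>UNIV. p2 (u - z))" unfolding F_def using f p2 by (intro sum_mono) (simp add: mult_left_le_one_le)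
    also have "\<dots> = 1" using sum_shift2[of p2 u] p2(2) by simp
    finally show ?thesis unfolding F_def using f p2 by (auto intro!: sum_nonneg)
  qed
  have ak01: "0 \<le> ak \<and> ak \<le> 1"
  proof -
    have "ak \<le> (\<Sum>z\<in>UNIV. p1 z)" unfolding ak_def using f p1 by (intro sum_mono) (simp add: mult_left_le_one_le)
    then show ?thesis unfolding ak_def using f p1 by (auto intro!: sum_nonneg)
  qed
  define S' where "S' = (\<Sum>y\<in>UNIV. \<Sum>z\<in>UNIV. (f1 y * p1 y) * fk z * \<Psi> (- (y + z)))"
  have C1: "\<bar>(\<Sum>y\<in>UNIV. \<Sum>z\<in>UNIV. (f1 y * sqrt (p1 y)) * (fk z * sqrt (p1 z)) * \<Psi> (- (y + z))) - S'\<bar>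
            \<le> 2 * expect \<Psi> \<phi>"
  proof -
    have "\<bar>(\<Sum>y\<in>UNIV. \<Sum>z\<in>UNIV. (f1 y * sqrt (p1 y)) * (fk z * sqrt (p1 z)) * \<Psi> (- (y + z))) - S'\<bar>
        = \<bar>\<Sum>y\<in>UNIV. \<Sum>z\<in>UNIV. f1 y * fk z * \<Psi> (- (y + z)) * (sqrt (p1 y) * (sqrt (p1 z) - sqrt (p1 y)))\<bar>"
      unfolding S'_def using p1(1)
      by (simp add: sum_subtractf[symmetric] algebra_simps)
    also have "\<dots> \<le> (\<Sum>y\<in>UNIV. \<Sum>z\<in>UNIV. \<bar>f1 y * fk z * \<Psi> (- (y + z)) * (sqrt (p1 y) * (sqrt (p1 z) - sqrt (p1 y)))\<bar>)"
      by (rule order_trans[OF sum_abs]) (intro sum_mono sum_abs)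
    also have "\<dots> \<le> (\<Sum>y\<in>UNIV. \<Sum>z\<in>UNIV. \<Psi> (- (y + z)) * \<bar>p1 z - p1 y\<bar>)"
    proof (intro sum_mono)
      fix y z
      have "\<bar>f1 y * fk z * \<Psi> (- (y + z)) * (sqrt (p1 y) * (sqrt (p1 z) - sqrt (p1 y)))\<bar>
           = (f1 y * fk z) * (\<Psi> (- (y + z)) * (sqrt (p1 y) * \<bar>sqrt (p1 z) - sqrt (p1 y)\<bar>))"
        using f Psi p1(1)[of y] by (simp add: abs_mult)
      also have "\<dots> \<le> 1 * (\<Psi> (- (y + z)) * (sqrt (p1 y) * \<bar>sqrt (p1 z) - sqrt (p1 y)\<bar>))"
        using f Psi p1(1)[of y] by (intro mult_right_mono) (auto intro: mult_le_one mult_nonneg_nonneg)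
      also have "\<dots> \<le> \<Psi> (- (y + z)) * \<bar>p1 z - p1 y\<bar>"
        using sqrt_diff_le[OF p1(1) p1(1), of y z] Psi by (simp add: mult_left_mono)
      finally show "\<bar>f1 y * fk z * \<Psi> (- (y + z)) * (sqrt (p1 y) * (sqrt (p1 z) - sqrt (p1 y)))\<bar> \<le> \<Psi> (- (y + z)) * \<bar>p1 z - p1 y\<bar>" .
    qed
    also have "\<dots> = (\<Sum>y\<in>UNIV. \<Sum>w\<in>UNIV. \<Psi> w * \<bar>p1 (y + w) - p1 y\<bar>)"
    proof (rule sum.cong[OF refl])
      fix y
      show "(\<Sum>z\<in>UNIV. \<Psi> (- (y + z)) * \<bar>p1 z - p1 y\<bar>) = (\<Sum>w\<in>UNIV. \<Psi> w * \<bar>p1 (y + w) - p1 y\<bar>)"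
        by (rule sum.reindex_bij_witness[of _ "\<lambda>w. - y - w" "\<lambda>z. - (y + z)"]) (auto simp: p1sym p1(3) algebra_simps)
    qed
    also have "\<dots> = (\<Sum>w\<in>UNIV. \<Psi> w * (\<Sum>y\<in>UNIV. \<bar>p1 (y + w) - p1 y\<bar>))"
      by (subst sum.swap) (simp add: sum_distrib_left)
    also have "\<dots> \<le> (\<Sum>w\<in>UNIV. \<Psi> w * (2 * \<phi> w))"
      using Psi p1s by (intro sum_mono mult_left_mono) auto
    also have "\<dots> = 2 * expect \<Psi> \<phi>" by (simp add: expect_def sum_distrib_left algebra_simps)
    finally show ?thesis .
  qed
  have S'eq: "S' - a1 * ak = (\<Sum>y\<in>UNIV. f1 y * p1 y * (H y - ak))"
    unfolding S'_def a1_def H_def by (simp add: algebra_simps sum_distrib_left sum_distrib_right sum_subtractf)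
  have C2: "\<bar>S' - a1 * ak\<bar> \<le> (\<Sum>y\<in>UNIV. p1 y * \<bar>H y - ak\<bar>)"
  proof -
    have "\<bar>S' - a1 * ak\<bar> \<le> (\<Sum>y\<in>UNIV. \<bar>f1 y * p1 y * (H y - ak)\<bar>)" unfolding S'eq by (rule sum_abs)
    also have "\<dots> \<le> (\<Sum>y\<in>UNIV. p1 y * \<bar>H y - ak\<bar>)"
    proof (intro sum_mono)
      fix y
      have "\<bar>f1 y * p1 y * (H y - ak)\<bar> = f1 y * (p1 y * \<bar>H y - ak\<bar>)" using f p1 by (simp add: abs_mult)
      also have "\<dots> \<le> 1 * (p1 y * \<bar>H y - ak\<bar>)" using f p1 by (intro mult_right_mono) auto
      finally show "\<bar>f1 y * p1 y * (H y - ak)\<bar> \<le> p1 y * \<bar>H y - ak\<bar>" by simp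
    qed
    finally show ?thesis .
  qed
  have C3: "H y = (\<Sum>w\<in>UNIV. \<Psi>' w * F (- y - w))" for y
  proof -
    have "H y = (\<Sum>z\<in>UNIV. \<Sum>w\<in>UNIV. fk z * (\<Psi>' w * p2 (- (y + z) - w)))"
      unfolding H_def \<Psi>_def \<Psi>'_def by (simp add: conv_def sum_distrib_left)
    also have "\<dots> = (\<Sum>z\<in>UNIV. \<Sum>w\<in>UNIV. fk z * (\<Psi>' w * p2 (- y - w - z)))"
    proof -
      have "- (y + z) - w = - y - w - z" for z w :: 'a by (simp add: algebra_simps)
      then show ?thesis by (simp only:)
    qed
    also have "\<dots> = (\<Sum>w\<in>UNIV. \<Psi>' w * (\<Sum>z\<in>UNIV. fk z * p2 (- y - w - z)))"
      by (subst sum.swap) (simp add: sum_distrib_left mult_ac)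
    finally show ?thesis by (simp add: F_def)
  qed
  have C45: "(\<Sum>y\<in>UNIV. p1 y * \<bar>H y - ak\<bar>) \<le> (\<Sum>w\<in>UNIV. \<Psi>' w * (\<Sum>u\<in>UNIV. p1 (u + w) * \<bar>F u - ak\<bar>))"
  proof -
    have "\<bar>H y - ak\<bar> \<le> (\<Sum>w\<in>UNIV. \<Psi>' w * \<bar>F (- y - w) - ak\<bar>)" for y
    proof -
      have "H y - ak = (\<Sum>w\<in>UNIV. \<Psi>' w * (F (- y - w) - ak))"
        unfolding C3 using Psi'(2) by (simp add: algebra_simps sum_subtractf sum_distrib_left[symmetric])
      then have "\<bar>H y - ak\<bar> \<le> (\<Sum>w\<in>UNIV. \<bar>\<Psi>' w * (F (- y - w) - ak)\<bar>)" by (simp add: sum_abs)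
      also have "\<dots> = (\<Sum>w\<in>UNIV. \<Psi>' w * \<bar>F (- y - w) - ak\<bar>)" using Psi' by (simp add: abs_mult)
      finally show ?thesis .
    qed
    then have "(\<Sum>y\<in>UNIV. p1 y * \<bar>H y - ak\<bar>) \<le> (\<Sum>y\<in>UNIV. p1 y * (\<Sum>w\<in>UNIV. \<Psi>' w * \<bar>F (- y - w) - ak\<bar>))"
      using p1 by (intro sum_mono mult_left_mono) auto
    also have "\<dots> = (\<Sum>w\<in>UNIV. \<Psi>' w * (\<Sum>y\<in>UNIV. p1 y * \<bar>F (- y - w) - ak\<bar>))"
      unfolding sum_distrib_left by (subst sum.swap) (simp add: mult_ac)
    also have "\<dots> = (\<Sum>w\<in>UNIV. \<Psi>' w * (\<Sum>u\<in>UNIV. p1 (u + w) * \<bar>F u - ak\<bar>))"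
    proof (rule sum.cong[OF refl])
      fix w
      have "(\<Sum>y\<in>UNIV. p1 y * \<bar>F (- y - w) - ak\<bar>) = (\<Sum>u\<in>UNIV. p1 (u + w) * \<bar>F u - ak\<bar>)"
        by (rule sum.reindex_bij_witness[of _ "\<lambda>u. - u - w" "\<lambda>y. - y - w"]) (auto simp: p1sym p1(3) algebra_simps)
      then show "\<Psi>' w * (\<Sum>y\<in>UNIV. p1 y * \<bar>F (- y - w) - ak\<bar>) = \<Psi>' w * (\<Sum>u\<in>UNIV. p1 (u + w) * \<bar>F u - ak\<bar>)" by simp
    qed
    finally show ?thesis .
  qed
  have CS: "(\<Sum>u\<in>UNIV. p1 u * \<bar>F u - ak\<bar>) \<le> \<epsilon>"
    by (rule weighted_CS[OF p1(1,2) _ e0]) (use cond in \<open>simp add: F_def ak_def\<close>)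
  have C6: "(\<Sum>u\<in>UNIV. p1 (u + w) * \<bar>F u - ak\<bar>) \<le> \<epsilon> + 2 * \<phi> w" for w
  proof -
    have "(\<Sum>u\<in>UNIV. p1 (u + w) * \<bar>F u - ak\<bar>) \<le> (\<Sum>u\<in>UNIV. p1 u * \<bar>F u - ak\<bar> + \<bar>p1 (u + w) - p1 u\<bar>)"
    proof (intro sum_mono)
      fix u
      have fa: "\<bar>F u - ak\<bar> \<le> 1" using F01[of u] ak01 by auto
      have "p1 (u + w) * \<bar>F u - ak\<bar> = p1 u * \<bar>F u - ak\<bar> + (p1 (u + w) - p1 u) * \<bar>F u - ak\<bar>" by (simp add: algebra_simps)
      also have "\<dots> \<le> p1 u * \<bar>F u - ak\<bar> + \<bar>p1 (u + w) - p1 u\<bar> * 1"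
      proof (intro add_left_mono)
        have "(p1 (u + w) - p1 u) * \<bar>F u - ak\<bar> \<le> \<bar>p1 (u + w) - p1 u\<bar> * \<bar>F u - ak\<bar>"
          by (intro mult_right_mono) auto
        also have "\<dots> \<le> \<bar>p1 (u + w) - p1 u\<bar> * 1" using fa by (intro mult_left_mono) auto
        finally show "(p1 (u + w) - p1 u) * \<bar>F u - ak\<bar> \<le> \<bar>p1 (u + w) - p1 u\<bar> * 1" .
      qed
      finally show "p1 (u + w) * \<bar>F u - ak\<bar> \<le> p1 u * \<bar>F u - ak\<bar> + \<bar>p1 (u + w) - p1 u\<bar>" by simp
    qed
    also have "\<dots> \<le> \<epsilon> + 2 * \<phi> w" using CS p1s[of w] by (simp add: sum.distrib)
    finally show ?thesis .
  qed
  have C7: "(\<Sum>w\<in>UNIV. \<Psi>' w * (\<Sum>u\<in>UNIV. p1 (u + w) * \<bar>F u - ak\<bar>)) \<le> \<epsilon> + 2 * expect \<Psi>' \<phi>"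
  proof -
    have "(\<Sum>w\<in>UNIV. \<Psi>' w * (\<Sum>u\<in>UNIV. p1 (u + w) * \<bar>F u - ak\<bar>)) \<le> (\<Sum>w\<in>UNIV. \<Psi>' w * (\<epsilon> + 2 * \<phi> w))"
      using C6 Psi' by (intro sum_mono mult_left_mono) auto
    also have "\<dots> = \<epsilon> * (\<Sum>w\<in>UNIV. \<Psi>' w) + 2 * expect \<Psi>' \<phi>"
      by (simp add: expect_def algebra_simps sum.distrib sum_distrib_left)
    finally show ?thesis using Psi'(2) by simp
  qed
  have "\<bar>(\<Sum>y\<in>UNIV. \<Sum>z\<in>UNIV. (f1 y * sqrt (p1 y)) * (fk z * sqrt (p1 z)) * \<Psi> (- (y + z))) - a1 * ak\<bar>
     \<le> \<bar>(\<Sum>y\<in>UNIV. \<Sum>z\<in>UNIV. (f1 y * sqrt (p1 y)) * (fk z * sqrt (p1 z)) * \<Psi> (- (y + z))) - S'\<bar> + \<bar>S' - a1 * ak\<bar>"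
    by linarith
  also have "\<dots> \<le> 2 * expect \<Psi> \<phi> + (\<epsilon> + 2 * expect \<Psi>' \<phi>)"
    using C1 C2 C45 C7 by linarith
  finally show ?thesis unfolding \<Psi>_def \<Psi>'_def a1_def ak_def by simp
qed

lemma fourier_norm_le:
  assumes "\<gamma> \<in> characters"
  shows "norm (fourier f \<gamma>) \<le> (\<Sum>x\<in>UNIV. \<bar>f x\<bar>)"
proof -
  have c: "character \<gamma>" using assms by (simp add: characters_def)
  have "norm (fourier f \<gamma>) \<le> (\<Sum>x\<in>UNIV. norm (complex_of_real (f x) * \<gamma> x))"
    unfolding fourier_def by (rule norm_sum)
  also have "\<dots> = (\<Sum>x\<in>UNIV. \<bar>f x\<bar>)" by (simp add: norm_mult char_norm[OF c])
  finally show ?thesis .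
qed

lemma fourier_scale: "fourier (\<lambda>n. a * f n) \<gamma> = complex_of_real a * fourier f \<gamma>"
  unfolding fourier_def by (simp add: sum_distrib_left mult.assoc)

lemma fourier_diff: "fourier f \<gamma> - fourier g \<gamma> = fourier (\<lambda>n. f n - g n) \<gamma>"
  unfolding fourier_def by (simp add: sum_subtractf[symmetric] algebra_simps)

lemma prod_split_ends:
  fixes k :: nat
  assumes "k \<ge> 2"
  shows "(\<Prod>i\<in>{1..k}. F i) = F 1 * F k * (\<Prod>i\<in>{2..k-1}. F i)"
proof -
  have "{1..k} = insert 1 (insert k {2..k-1})" using assms by auto
  moreover have "1 \<notin> insert k {2..k-1}" "k \<notin> {2..k-1}" using assms by auto
  ultimately show ?thesis by (simp add: mult.assoc)
qed

lemma lemmaA: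
  fixes g h :: "nat \<Rightarrow> 'a::{ab_group_add,finite} \<Rightarrow> real"
  assumes k: "k \<ge> 2" and e0: "\<epsilon> \<ge> 0" and g1: "g 1 = h 1" and gk: "g k = h k"
    and mid: "\<And>i \<gamma>. i \<in> {2..k-1} \<Longrightarrow> \<gamma> \<in> characters \<Longrightarrow>
       norm (fourier (g i) \<gamma>) \<le> 1 \<and> norm (fourier (h i) \<gamma>) \<le> 1 \<and> norm (fourier (g i) \<gamma> - fourier (h i) \<gamma>) \<le> \<epsilon>"
  shows "\<bar>Tform k g - Tform k h\<bar> \<le> real (k - 2) * \<epsilon> * (sqrt (\<Sum>x\<in>UNIV. (g 1 x)\<^sup>2) * sqrt (\<Sum>x\<in>UNIV. (g k x)\<^sup>2))"
proof -
  let ?C = "characters :: ('a \<Rightarrow> complex) set"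
  let ?M = "card ?C"
  have M0: "?M > 0" by (rule ncard_pos)
  have "complex_of_real (Tform k g) - complex_of_real (Tform k h) =
     (\<Sum>\<gamma>\<in>?C. fourier (g 1) \<gamma> * fourier (g k) \<gamma> * ((\<Prod>i\<in>{2..k-1}. fourier (g i) \<gamma>) - (\<Prod>i\<in>{2..k-1}. fourier (h i) \<gamma>))) / of_nat ?M"
  proof -
    have "complex_of_real (Tform k g) - complex_of_real (Tform k h) =
      ((\<Sum>\<gamma>\<in>?C. fourier (g 1) \<gamma> * fourier (g k) \<gamma> * (\<Prod>i\<in>{2..k-1}. fourier (g i) \<gamma>)) -
       (\<Sum>\<gamma>\<in>?C. fourier (g 1) \<gamma> * fourier (g k) \<gamma> * (\<Prod>i\<in>{2..k-1}. fourier (h i) \<gamma>))) / of_nat ?M"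
      unfolding Tform_fourier prod_split_ends[OF k] g1 gk by (simp only: diff_divide_distrib)
    also have "\<dots> = (\<Sum>\<gamma>\<in>?C. fourier (g 1) \<gamma> * fourier (g k) \<gamma> * ((\<Prod>i\<in>{2..k-1}. fourier (g i) \<gamma>) - (\<Prod>i\<in>{2..k-1}. fourier (h i) \<gamma>))) / of_nat ?M"
      by (simp only: sum_subtractf[symmetric] right_diff_distrib)
    finally show ?thesis .
  qed
  then have "norm (complex_of_real (Tform k g) - complex_of_real (Tform k h)) = norm ((\<Sum>\<gamma>\<in>?C. fourier (g 1) \<gamma> * fourier (g k) \<gamma> * ((\<Prod>i\<in>{2..k-1}. fourier (g i) \<gamma>) - (\<Prod>i\<in>{2..k-1}. fourier (h i) \<gamma>))) / of_nat ?M)"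
    by (simp only:)
  moreover have "norm (complex_of_real (Tform k g) - complex_of_real (Tform k h)) = \<bar>Tform k g - Tform k h\<bar>"
    by (simp only: of_real_diff[symmetric] norm_of_real)
  ultimately have "\<bar>Tform k g - Tform k h\<bar> = norm (\<Sum>\<gamma>\<in>?C. fourier (g 1) \<gamma> * fourier (g k) \<gamma> * ((\<Prod>i\<in>{2..k-1}. fourier (g i) \<gamma>) - (\<Prod>i\<in>{2..k-1}. fourier (h i) \<gamma>))) / real ?M"
    by (simp only: norm_divide norm_of_nat)
  also have "\<dots> \<le> (\<Sum>\<gamma>\<in>?C. norm (fourier (g 1) \<gamma>) * norm (fourier (g k) \<gamma>) * (real (k - 2) * \<epsilon>)) / real ?M"
  proof (intro divide_right_mono order_trans[OF norm_sum] sum_mono)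
    fix \<gamma> :: "'a \<Rightarrow> complex" assume gc: "\<gamma> \<in> ?C"
    have "norm ((\<Prod>i\<in>{2..k-1}. fourier (g i) \<gamma>) - (\<Prod>i\<in>{2..k-1}. fourier (h i) \<gamma>)) \<le> (\<Sum>i\<in>{2..k-1}. norm (fourier (g i) \<gamma> - fourier (h i) \<gamma>))"
      by (rule prod_diff_le) (use mid gc in auto)
    also have "\<dots> \<le> (\<Sum>i\<in>{2..k-1}. \<epsilon>)" by (intro sum_mono) (use mid gc in auto)
    also have "\<dots> = real (k - 2) * \<epsilon>" using k by simp
    finally have "norm ((\<Prod>i\<in>{2..k-1}. fourier (g i) \<gamma>) - (\<Prod>i\<in>{2..k-1}. fourier (h i) \<gamma>)) \<le> real (k - 2) * \<epsilon>" .
    then show "norm (fourier (g 1) \<gamma> * fourier (g k) \<gamma> * ((\<Prod>i\<in>{2..k-1}. fourier (g i) \<gamma>) - (\<Prod>i\<in>{2..k-1}. fourier (h i) \<gamma>)))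
          \<le> norm (fourier (g 1) \<gamma>) * norm (fourier (g k) \<gamma>) * (real (k - 2) * \<epsilon>)"
      by (simp add: norm_mult mult_left_mono)
  qed simp
  also have "\<dots> = real (k - 2) * \<epsilon> * ((\<Sum>\<gamma>\<in>?C. norm (fourier (g 1) \<gamma>) * norm (fourier (g k) \<gamma>)) / real ?M)"
    by (simp add: sum_distrib_left sum_divide_distrib mult_ac)
  also have "\<dots> \<le> real (k - 2) * \<epsilon> * (sqrt (\<Sum>x\<in>UNIV. (g 1 x)\<^sup>2) * sqrt (\<Sum>x\<in>UNIV. (g k x)\<^sup>2))"
  proof (intro mult_left_mono)
    show "0 \<le> real (k - 2) * \<epsilon>" using e0 by simp
    show "(\<Sum>\<gamma>\<in>?C. norm (fourier (g 1) \<gamma>) * norm (fourier (g k) \<gamma>)) / real ?M \<le> sqrt (\<Sum>x\<in>UNIV. (g 1 x)\<^sup>2) * sqrt (\<Sum>x\<in>UNIV. (g k x)\<^sup>2)"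
      using fourier_CS[of "g 1" "g k"] M0 by (simp add: divide_le_eq mult_ac)
  qed
  finally show ?thesis .
qed

lemma ln4e3: "ln (4 * exp 3) \<le> (5::real)"
proof -
  have "(2::real) * 2 \<le> exp 1 * exp 1" by (rule mult_mono) (use e_ge2 in auto)
  moreover have "exp 1 * exp 1 = exp (2::real)" by (simp add: exp_add[symmetric])
  ultimately have "(4::real) \<le> exp 2" by simp
  then have "ln (4::real) \<le> ln (exp 2)" by (subst ln_le_cancel_iff) auto
  then have "ln (4::real) \<le> 2" by simp
  then show ?thesis by (simp add: ln_mult)
qed

lemma lemmaB:
  fixes R :: "('a::{ab_group_add,finite} \<Rightarrow> complex) set"
  assumes fin: "finite R" and ch: "R \<subseteq> characters" and ne: "R \<noteq> {}"
    and e: "0 < \<epsilon>" "\<epsilon> \<le> 1" and eta: "0 < \<eta>" and k: "k \<ge> 3"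
  shows "expect (psi R (eta2 k \<epsilon> R \<eta>)) (phi R \<eta>) \<le> \<epsilon> / (8 * real k)"
proof -
  define d where "d = real (card R)"
  have "card R > 0" using fin ne by (simp add: card_gt_0_iff)
  then have d1: "d \<ge> 1" by (simp add: d_def)
  define \<delta> where "\<delta> = eta2 k \<epsilon> R \<eta>"
  have kpos: "real k \<ge> 3" using k by simp
  have \<delta>0: "\<delta> > 0" using e eta d1 kpos unfolding \<delta>_def eta2_def d_def[symmetric] by (intro divide_pos_pos mult_pos_pos) auto
  have d\<delta>: "d * \<delta> / \<eta> = \<epsilon> ^ 6 / (2 ^ 40 * real k ^ 4)"
    using d1 eta kpos unfolding \<delta>_def eta2_def d_def[symmetric] by (simp add: field_simps)
  define \<beta> where "\<beta> = beta R \<delta>"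
  have pb: "probfun \<beta>" unfolding \<beta>_def by (rule beta_prob[OF fin ch \<delta>0])
  have phs: "\<And>u w. phi R \<eta> (u + w) \<le> phi R \<eta> u + phi R \<eta> w" by (rule phi_sub[OF fin ch eta])
  have E1: "expect (psi R \<delta>) (phi R \<eta>) \<le> 2 * expect \<beta> (phi R \<eta>)"
  proof -
    have ps: "psi R \<delta> = conv \<beta> \<beta>" using ne by (simp add: psi_def \<beta>_def)
    have "expect (psi R \<delta>) (phi R \<eta>) \<le> expect \<beta> (phi R \<eta>) + expect \<beta> (phi R \<eta>)"
      unfolding ps by (rule expect_conv) (use pb phs in \<open>auto simp: probfun_def\<close>)
    then show ?thesis by simp
  qed
  define lam where "lam = 1 / \<delta>"
  define \<mu> where "\<mu> = 1 / \<eta>"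
  have lam0: "lam > 0" using \<delta>0 by (simp add: lam_def)
  have mu0: "\<mu> > 0" using eta by (simp add: \<mu>_def)
  have ZZ: "Zs R c = Zt (gnorm R) c" for c by (simp add: Zs_def Zt_def)
  have E2: "expect \<beta> (phi R \<eta>) = 1 - Zt (gnorm R) (lam + \<mu>) / Zt (gnorm R) lam"
  proof -
    have "expect \<beta> (phi R \<eta>) = (\<Sum>n\<in>UNIV. \<beta> n) - (\<Sum>n\<in>UNIV. \<beta> n * exp (- gnorm R n / \<eta>))"
      unfolding expect_def phi_def by (simp add: algebra_simps sum_subtractf)
    also have "(\<Sum>n\<in>UNIV. \<beta> n * exp (- gnorm R n / \<eta>)) = (\<Sum>n\<in>UNIV. exp (- (lam + \<mu>) * gnorm R n)) / Zs R lam"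
      unfolding \<beta>_def beta_eq[OF fin \<delta>0] sum_divide_distrib lam_def[symmetric]
      by (intro sum.cong refl) (simp add: exp_add[symmetric] \<mu>_def algebra_simps)
    finally show ?thesis using pb by (simp add: probfun_def ZZ Zt_def)
  qed
  define Q where "Q = lam / (2 * \<mu>)"
  have Qe: "Q = \<eta> / (2 * \<delta>)" by (simp add: Q_def lam_def \<mu>_def)
  have "\<delta> / \<eta> \<le> 1 / 4"
  proof -
    have "\<epsilon> ^ 6 \<le> 1" using e by (simp add: power_le_one)
    moreover have X4: "(4::real) \<le> 2 ^ 40 * real k ^ 4"
    proof -
      have "(1::real) \<le> real k ^ 4" using kpos by (intro one_le_power) auto
      then have "(4::real) * 1 \<le> 2 ^ 40 * real k ^ 4" by (intro mult_mono) auto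
      then show ?thesis by simp
    qed
    ultimately have "\<epsilon> ^ 6 / (2 ^ 40 * real k ^ 4) \<le> 1 / (2 ^ 40 * real k ^ 4)"
      by (intro divide_right_mono) auto
    also have "\<dots> \<le> 1 / 4" using X4 kpos by (intro divide_left_mono) auto
    finally have "\<epsilon> ^ 6 / (2 ^ 40 * real k ^ 4) \<le> 1 / 4" .
    then have "d * (\<delta> / \<eta>) \<le> 1 / 4" using d\<delta> by simp
    moreover have "\<delta> / \<eta> \<le> d * (\<delta> / \<eta>)"
    proof -
      have "0 \<le> \<delta> / \<eta>" using \<delta>0 eta by simp
      then have "1 * (\<delta> / \<eta>) \<le> d * (\<delta> / \<eta>)" using d1 by (intro mult_right_mono) auto
      then show ?thesis by simp
    qed
    ultimately show ?thesis by linarith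
  qed
  then have Q2: "Q \<ge> 2" using \<delta>0 eta unfolding Qe by (simp add: field_simps)
  define m where "m = nat \<lfloor>Q\<rfloor>"
  have m1: "real m \<ge> Q - 1" "real m \<le> Q" using Q2 by (simp_all add: m_def)
  have m_pos: "m \<ge> 1" using m1 Q2 by linarith
  have mQ: "real m \<ge> Q / 2" using m1 Q2 by linarith
  have mmu: "real m * \<mu> \<le> lam / 2"
    using m1(2) mu0 unfolding Q_def by (simp add: field_simps)
  define K :: real where "K = (4 * exp 3) ^ card R"
  have K0: "K > 0" by (simp add: K_def)
  have Kb: "Zt (gnorm R) (lam / 2) \<le> K * Zt (gnorm R) lam"
    using box_lemma[OF fin ch ne lam0] by (simp add: K_def ZZ)
  have r: "Zt (gnorm R) (lam + \<mu>) / Zt (gnorm R) lam \<ge> 1 - ln K / real m"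
    by (rule Zt_logconv[OF _ mu0 m_pos mmu Kb K0]) (use gnorm_nonneg[OF fin] in auto)
  have lnK: "ln K \<le> 5 * d"
  proof -
    have "ln K = d * ln (4 * exp 3)" unfolding K_def d_def by (rule ln_realpow)
    also have "\<dots> \<le> d * 5" using d1 ln4e3 by (intro mult_left_mono) auto
    finally show ?thesis by simp
  qed
  have "expect \<beta> (phi R \<eta>) \<le> ln K / real m" using E2 r by linarith
  also have "\<dots> \<le> 5 * d / (Q / 2)"
    using lnK mQ Q2 m_pos d1 by (intro frac_le) auto
  also have "\<dots> = 20 * (d * \<delta> / \<eta>)" unfolding Qe using \<delta>0 eta by (simp add: field_simps)
  also have "\<dots> = 20 * (\<epsilon> ^ 6 / (2 ^ 40 * real k ^ 4))" using d\<delta> by simp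
  finally have Eb: "expect \<beta> (phi R \<eta>) \<le> 20 * (\<epsilon> ^ 6 / (2 ^ 40 * real k ^ 4))" .
  have fin_ineq: "40 * (\<epsilon> ^ 6 / (2 ^ 40 * real k ^ 4)) \<le> \<epsilon> / (8 * real k)"
  proof -
    have "\<epsilon> ^ 5 \<le> 1" using e by (intro power_le_one) auto
    then have "\<epsilon> * \<epsilon> ^ 5 \<le> \<epsilon> * 1" using e by (intro mult_left_mono) auto
    then have e6: "\<epsilon> ^ 6 \<le> \<epsilon>" by (simp add: power_Suc[symmetric] del: power_Suc)
    have "real k \<le> real k ^ 4" using kpos by (intro self_le_power) auto
    moreover have "320 * real k \<le> 2 ^ 40 * real k" using kpos by simp
    moreover have "2 ^ 40 * real k \<le> 2 ^ 40 * real k ^ 4" using \<open>real k \<le> real k ^ 4\<close> by simp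
    ultimately have k4: "320 * real k \<le> 2 ^ 40 * real k ^ 4" by linarith
    have "40 * \<epsilon> ^ 6 * (8 * real k) \<le> 40 * \<epsilon> * (8 * real k)" using e6 kpos by (intro mult_right_mono) auto
    also have "\<dots> = \<epsilon> * (320 * real k)" by simp
    also have "\<dots> \<le> \<epsilon> * (2 ^ 40 * real k ^ 4)" using k4 e by (intro mult_left_mono) auto
    finally have A: "40 * \<epsilon> ^ 6 * (8 * real k) \<le> \<epsilon> * (2 ^ 40 * real k ^ 4)" .
    have X0: "(0::real) < 2 ^ 40 * real k ^ 4" "(0::real) < 8 * real k" using kpos by auto
    show ?thesis using A X0 by (simp add: divide_simps)
  qed
  show ?thesis using E1 Eb fin_ineq unfolding \<delta>_def by linarith
qed

lemma psi_prob2: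
  assumes "finite \<Gamma>" "\<Gamma> \<subseteq> characters" "\<Gamma> = {} \<or> \<delta> > 0"
  shows "probfun (psi \<Gamma> \<delta>)"
proof (cases "\<Gamma> = {}")
  case True then show ?thesis by (simp add: psi_def probfun_def)
next
  case False then show ?thesis using assms psi_prob[OF assms(1,2)] by auto
qed

lemma alpha1_eq:
  fixes A :: "'a::{ab_group_add,finite} set"
  assumes "probfun (psi1 R \<eta>)"
  shows "alpha1 A R \<eta> x0 = (\<Sum>y\<in>UNIV. indicator A (x0 + y) * psi1 R \<eta> y)"
proof -
  have "alpha1 A R \<eta> x0 = (\<Sum>m\<in>UNIV. indicator A m * psi1 R \<eta> (x0 - m))"
    by (simp add: alpha1_def conv_def)
  also have "\<dots> = (\<Sum>y\<in>UNIV. indicator A (x0 + y) * psi1 R \<eta> (- y))"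
    by (rule sum.reindex_bij_witness[of _ "\<lambda>y. x0 + y" "\<lambda>m. m - x0"]) auto
  also have "\<dots> = (\<Sum>y\<in>UNIV. indicator A (x0 + y) * psi1 R \<eta> y)"
    using assms by (simp add: probfun_def)
  finally show ?thesis .
qed

lemma alpha2_eq:
  fixes A :: "'a::{ab_group_add,finite} set"
  shows "alpha2 k \<epsilon> A R \<eta> (x0 + u) = (\<Sum>z\<in>UNIV. indicator A (x0 + z) * psi2 k \<epsilon> R \<eta> (u - z))"
proof -
  have "alpha2 k \<epsilon> A R \<eta> (x0 + u) = (\<Sum>m\<in>UNIV. indicator A m * psi2 k \<epsilon> R \<eta> (x0 + u - m))"
    by (simp add: alpha2_def conv_def)
  also have "\<dots> = (\<Sum>z\<in>UNIV. indicator A (x0 + z) * psi2 k \<epsilon> R \<eta> (u - z))"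
    by (rule sum.reindex_bij_witness[of _ "\<lambda>z. x0 + z" "\<lambda>m. m - x0"]) (auto simp: algebra_simps)
  finally show ?thesis .
qed

lemma alpha_01:
  fixes A :: "'a::{ab_group_add,finite} set"
  assumes "\<And>x. p x \<ge> 0" "(\<Sum>x\<in>UNIV. p x) = 1"
  shows "0 \<le> conv (indicator A) p y \<and> conv (indicator A) p y \<le> 1"
proof -
  have "conv (indicator A) p y \<le> (\<Sum>m\<in>UNIV. p (y - m))"
    unfolding conv_def using assms by (intro sum_mono) (auto simp: indicator_def)
  also have "\<dots> = 1" using sum_shift2[of p y] assms by simp
  finally show ?thesis unfolding conv_def using assms by (auto intro!: sum_nonneg simp: indicator_def)
qed

lemma k_le_pow: "k \<le> 2 ^ k" for k :: nat
  using less_exp[of k] by simp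

lemma k_le_pow4: "k \<ge> 3 \<Longrightarrow> real k - 1 \<le> 2 ^ k / 4"
proof (induction k rule: nat_induct_at_least)
  case base then show ?case by simp
next
  case (Suc n)
  have "(1::real) \<le> 2 ^ n / 4"
  proof -
    have "(2::real) ^ 3 \<le> 2 ^ n" using Suc(1) by (intro power_increasing) auto
    then show ?thesis by simp
  qed
  then show ?case using Suc by simp
qed

theorem proposition6p2:
  fixes k :: nat and \<epsilon> \<eta> :: real
    and A :: "nat \<Rightarrow> 'a::{ab_group_add,finite} set"
    and R :: "('a \<Rightarrow> complex) set"
    and x :: "nat \<Rightarrow> 'a"
  assumes "k \<ge> 3" and "\<epsilon> > 0"
    and "R \<subseteq> characters" and "0 < \<eta>" and "\<eta> \<le> 1"
    and "\<forall>i\<in>{1..k}. regular_pair k \<epsilon> (A i) R \<eta>"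
    and "(\<Sum>i=1..k. x i) = 0"
    and "\<forall>i\<in>{1..k}. regular_value k \<epsilon> (A i) R \<eta> (x i)"
  shows "\<bar>Tform k (\<lambda>i n. indicator (A i) (x i + n) *
                    (if i = 1 \<or> i = k then sqrt (psi1 R \<eta> n) else psi2 k \<epsilon> R \<eta> n))
          - alpha1 (A 1) R \<eta> (x 1) * (\<Prod>i=2..k-1. alpha2 k \<epsilon> (A i) R \<eta> (x i))
              * alpha1 (A k) R \<eta> (x k)\<bar>
         \<le> 4 * 2 ^ k * \<epsilon>"
proof -
  note k3 = assms(1) and e0 = assms(2) and ch = assms(3) and eta = assms(4)
  note reg = assms(8)
  have fR: "finite R" using ch finite_characters finite_subset by blast
  define p1 where "p1 = psi1 R \<eta>"
  define p2 where "p2 = psi2 k \<epsilon> R \<eta>"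
  have pr1: "probfun p1" unfolding p1_def psi1_def by (rule psi_prob[OF fR ch eta])
  have pr2: "probfun p2"
  proof (cases "R = {}")
    case True then show ?thesis unfolding p2_def psi2_def by (intro psi_prob2[OF fR ch]) auto
  next
    case False
    then have "card R > 0" using fR by (simp add: card_gt_0_iff)
    then have "eta2 k \<epsilon> R \<eta> > 0" using e0 eta k3 unfolding eta2_def by (intro divide_pos_pos mult_pos_pos) auto
    then show ?thesis unfolding p2_def psi2_def by (intro psi_prob2[OF fR ch]) auto
  qed
  have p1n: "\<And>y. p1 y \<ge> 0" and p1s: "(\<Sum>y\<in>UNIV. p1 y) = 1" and p1m: "\<And>y. p1 (- y) = p1 y"
    using pr1 by (auto simp: probfun_def)
  have p2n: "\<And>y. p2 y \<ge> 0" and p2s: "(\<Sum>y\<in>UNIV. p2 y) = 1"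
    using pr2 by (auto simp: probfun_def)
  define f where "f i n = (indicator (A i) (x i + n) :: real)" for i n
  have f01: "0 \<le> f i n" "f i n \<le> 1" for i n by (auto simp: f_def indicator_def)
  define g where "g = (\<lambda>i n. indicator (A i) (x i + n) *
                    (if i = 1 \<or> i = k then sqrt (psi1 R \<eta> n) else psi2 k \<epsilon> R \<eta> n))"
  define a where "a i = alpha2 k \<epsilon> (A i) R \<eta> (x i)" for i
  define P where "P = (\<Prod>i=2..k-1. a i)"
  define a1 where "a1 = alpha1 (A 1) R \<eta> (x 1)"
  define ak where "ak = alpha1 (A k) R \<eta> (x k)"
  have a1e: "a1 = (\<Sum>y\<in>UNIV. f 1 y * p1 y)" unfolding a1_def f_def p1_def using alpha1_eq pr1 p1_def by simp
  have ake: "ak = (\<Sum>y\<in>UNIV. f k y * p1 y)" unfolding ak_def f_def p1_def using alpha1_eq pr1 p1_def by simp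
  have a01: "0 \<le> a i \<and> a i \<le> 1" for i
    unfolding a_def alpha2_def using alpha_01[OF p2n p2s] by (simp add: p2_def)
  have a101: "0 \<le> a1 \<and> a1 \<le> 1" "0 \<le> ak \<and> ak \<le> 1"
    unfolding a1_def ak_def alpha1_def using alpha_01[OF p1n p1s] by (simp_all add: p1_def)
  have P01: "0 \<le> P \<and> P \<le> 1" unfolding P_def using a01 by (auto intro: prod_nonneg prod_le_1)
  have g1: "g 1 y = f 1 y * sqrt (p1 y)" for y by (simp add: g_def f_def p1_def)
  have gk: "g k y = f k y * sqrt (p1 y)" for y by (simp add: g_def f_def p1_def)
  have gmid: "g i y = f i y * p2 y" if "i \<in> {2..k-1}" for i y using that k3 by (auto simp: g_def f_def p2_def)
  have sq1: "sqrt (\<Sum>y\<in>UNIV. (g i y)\<^sup>2) \<le> 1" if "i = 1 \<or> i = k" for i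
  proof -
    have "(\<Sum>y\<in>UNIV. (g i y)\<^sup>2) \<le> (\<Sum>y\<in>UNIV. p1 y)"
    proof (intro sum_mono)
      fix y
      have "(g i y)\<^sup>2 = (f i y)\<^sup>2 * p1 y" using that g1 gk p1n by (auto simp: power_mult_distrib)
      also have "\<dots> \<le> 1 * p1 y" using f01[of i y] p1n[of y] by (intro mult_right_mono) (auto simp: power_le_one)
      finally show "(g i y)\<^sup>2 \<le> p1 y" by simp
    qed
    then show ?thesis using p1s by simp
  qed
  have fmid: "norm (fourier (g i) \<gamma>) \<le> 1" if "i \<in> {2..k-1}" "\<gamma> \<in> characters" for i \<gamma>
  proof -
    have "norm (fourier (g i) \<gamma>) \<le> (\<Sum>y\<in>UNIV. \<bar>g i y\<bar>)" by (rule fourier_norm_le[OF that(2)])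
    also have "\<dots> \<le> (\<Sum>y\<in>UNIV. p2 y)"
      using gmid[OF that(1)] f01 p2n by (intro sum_mono) (simp add: abs_mult mult_left_le_one_le)
    finally show ?thesis using p2s by simp
  qed
  have main_goal: "\<bar>Tform k g - a1 * P * ak\<bar> \<le> 4 * 2 ^ k * \<epsilon>"
  proof (cases "\<epsilon> \<ge> 1/16")
    case True
    define h0 where "h0 i n = (if i = 1 \<or> i = k then g i n else 0)" for i n
    have T0: "Tform k h0 = 0"
    proof -
      have z: "(\<Prod>i\<in>{1..k}. h0 i (p i)) = 0" for p :: "nat \<Rightarrow> 'a"
        using k3 by (intro prod_zero) (auto simp: h0_def intro!: bexI[of _ 2])
      show ?thesis unfolding Tform_def by (intro sum.neutral ballI z)
    qed
    have "\<bar>Tform k g - Tform k h0\<bar> \<le> real (k - 2) * 1 * (sqrt (\<Sum>y\<in>UNIV. (g 1 y)\<^sup>2) * sqrt (\<Sum>y\<in>UNIV. (g k y)\<^sup>2))"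
    proof (rule lemmaA)
      show "2 \<le> k" using k3 by simp
      show "g 1 = h0 1" "g k = h0 k" by (auto simp: h0_def)
      fix i and \<gamma> :: "'a \<Rightarrow> complex" assume i: "i \<in> {2..k-1}" and gc: "\<gamma> \<in> characters"
      have "h0 i = (\<lambda>_. 0)" using i k3 by (auto simp: h0_def)
      then have "fourier (h0 i) \<gamma> = 0" by (simp add: fourier_def)
      then show "norm (fourier (g i) \<gamma>) \<le> 1 \<and> norm (fourier (h0 i) \<gamma>) \<le> 1 \<and> norm (fourier (g i) \<gamma> - fourier (h0 i) \<gamma>) \<le> 1"
        using fmid[OF i gc] by simp
    qed simp
    also have "\<dots> \<le> real (k - 2) * 1 * (1 * 1)"
      using sq1 by (intro mult_left_mono mult_mono) (auto simp: sum_nonneg)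
    finally have "\<bar>Tform k g\<bar> \<le> real (k - 2)" using T0 by simp
    moreover have "0 \<le> a1 * P * ak \<and> a1 * P * ak \<le> 1" using a101 P01 by (auto intro: mult_le_one)
    ultimately have "\<bar>Tform k g - a1 * P * ak\<bar> \<le> real k - 1" using k3 by auto
    also have "\<dots> \<le> 2 ^ k / 4" by (rule k_le_pow4[OF k3])
    also have "\<dots> = 4 * 2 ^ k * (1/16)" by simp
    also have "\<dots> \<le> 4 * 2 ^ k * \<epsilon>" using True by (intro mult_left_mono) auto
    finally show ?thesis .
  next
    case False
    then have e16: "\<epsilon> < 1/16" by simp
    have e1: "\<epsilon> \<le> 1" using e16 by simp
    define h where "h i n = (if i = 1 \<or> i = k then g i n else a i * p2 n)" for i n
    have hmid: "h i = (\<lambda>n. a i * p2 n)" if "i \<in> {2..k-1}" for i using that k3 by (intro ext) (auto simp: h_def)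
    have stepA: "\<bar>Tform k g - Tform k h\<bar> \<le> real (k - 2) * \<epsilon>"
    proof -
      have "\<bar>Tform k g - Tform k h\<bar> \<le> real (k - 2) * \<epsilon> * (sqrt (\<Sum>y\<in>UNIV. (g 1 y)\<^sup>2) * sqrt (\<Sum>y\<in>UNIV. (g k y)\<^sup>2))"
      proof (rule lemmaA)
        show "2 \<le> k" using k3 by simp
        show "0 \<le> \<epsilon>" using e0 by simp
        show "g 1 = h 1" "g k = h k" by (auto simp: h_def)
        fix i and \<gamma> :: "'a \<Rightarrow> complex" assume i: "i \<in> {2..k-1}" and gc: "\<gamma> \<in> characters"
        have nh: "norm (fourier (h i) \<gamma>) \<le> 1"
        proof -
          have "norm (fourier (h i) \<gamma>) \<le> (\<Sum>y\<in>UNIV. \<bar>h i y\<bar>)" by (rule fourier_norm_le[OF gc])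
          also have "\<dots> \<le> (\<Sum>y\<in>UNIV. p2 y)"
            unfolding hmid[OF i] using a01[of i] p2n by (intro sum_mono) (simp add: abs_mult mult_left_le_one_le)
          finally show ?thesis using p2s by simp
        qed
        have "fourier (g i) \<gamma> - fourier (h i) \<gamma> = fourier (\<lambda>n. g i n - h i n) \<gamma>" by (rule fourier_diff)
        also have "(\<lambda>n. g i n - h i n) = (\<lambda>n. (indicator (A i) (x i + n) - alpha2 k \<epsilon> (A i) R \<eta> (x i)) * psi2 k \<epsilon> R \<eta> n)"
          unfolding hmid[OF i] using gmid[OF i] by (auto simp: f_def a_def p2_def algebra_simps)
        finally have "norm (fourier (g i) \<gamma> - fourier (h i) \<gamma>) =
            cmod (\<Sum>n\<in>UNIV. complex_of_real ((indicator (A i) (x i + n) - alpha2 k \<epsilon> (A i) R \<eta> (x i)) * psi2 k \<epsilon> R \<eta> n) * \<gamma> n)"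
          by (simp add: fourier_def)
        also have "\<dots> \<le> \<epsilon>" using reg i k3 gc by (auto simp: regular_value_def)
        finally show "norm (fourier (g i) \<gamma>) \<le> 1 \<and> norm (fourier (h i) \<gamma>) \<le> 1 \<and> norm (fourier (g i) \<gamma> - fourier (h i) \<gamma>) \<le> \<epsilon>"
          using fmid[OF i gc] nh by simp
      qed
      also have "\<dots> \<le> real (k - 2) * \<epsilon> * (1 * 1)"
        using sq1 e0 by (intro mult_left_mono mult_mono) (auto simp: sum_nonneg)
      finally show ?thesis by simp
    qed
    define \<Psi> where "\<Psi> = psipow p2 (k - 2)"
    define S where "S = (\<Sum>y\<in>UNIV. \<Sum>z\<in>UNIV. g 1 y * g k z * \<Psi> (- (y + z)))"
    have stepT: "Tform k h = P * S"
    proof -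
      let ?C = "characters :: ('a \<Rightarrow> complex) set"
      let ?M = "card ?C"
      have "complex_of_real (Tform k h) = (\<Sum>\<gamma>\<in>?C. fourier (g 1) \<gamma> * fourier (g k) \<gamma> * (\<Prod>i\<in>{2..k-1}. fourier (h i) \<gamma>)) / of_nat ?M"
      proof -
        have ks: "2 \<le> k" using k3 by simp
        have hh: "h 1 = g 1" "h k = g k" by (auto simp: h_def fun_eq_iff)
        show ?thesis unfolding Tform_fourier prod_split_ends[OF ks] hh ..
      qed
      also have "\<dots> = (\<Sum>\<gamma>\<in>?C. fourier (g 1) \<gamma> * fourier (g k) \<gamma> * (complex_of_real P * fourier \<Psi> \<gamma>)) / of_nat ?M"
      proof -
        have "(\<Prod>i\<in>{2..k-1}. fourier (h i) \<gamma>) = complex_of_real P * fourier \<Psi> \<gamma>" if "\<gamma> \<in> ?C" for \<gamma>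
        proof -
          have "(\<Prod>i\<in>{2..k-1}. fourier (h i) \<gamma>) = (\<Prod>i\<in>{2..k-1}. complex_of_real (a i) * fourier p2 \<gamma>)"
            by (intro prod.cong refl) (simp add: hmid fourier_scale)
          also have "\<dots> = complex_of_real P * fourier p2 \<gamma> ^ (k - 2)"
            using k3 by (simp add: prod.distrib P_def)
          also have "\<dots> = complex_of_real P * fourier \<Psi> \<gamma>" by (simp add: \<Psi>_def psipow_fourier[OF that])
          finally show ?thesis .
        qed
        then show ?thesis by (simp cong: sum.cong)
      qed
      also have "\<dots> = complex_of_real P * ((\<Sum>\<gamma>\<in>?C. fourier (g 1) \<gamma> * fourier (g k) \<gamma> * fourier \<Psi> \<gamma>) / of_nat ?M)"
        by (simp add: sum_distrib_left mult_ac)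
      also have "\<dots> = complex_of_real P * complex_of_real S"
        unfolding S_def T3_fourier ..
      finally have "complex_of_real (Tform k h) = complex_of_real (P * S)" by simp
      then show ?thesis by (simp only: of_real_eq_iff)
    qed
    define \<phi> where "\<phi> = phi R \<eta>"
    have stepC: "\<bar>S - a1 * ak\<bar> \<le> \<epsilon> + 2 * expect (psipow p2 (Suc (k - 3))) \<phi> + 2 * expect (psipow p2 (k - 3)) \<phi>"
    proof -
      have kk: "Suc (k - 3) = k - 2" using k3 by simp
      have shift: "(\<Sum>y\<in>UNIV. \<bar>p1 (y + w) - p1 y\<bar>) \<le> 2 * \<phi> w" for w
      proof -
        have "(\<Sum>y\<in>UNIV. \<bar>p1 (y + w) - p1 y\<bar>) \<le> 2 * (1 - exp (- gnorm R w / \<eta>))"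
        proof (rule L1_shift[OF p1n p1s])
          show "exp (- gnorm R w / \<eta>) * p1 y \<le> p1 (y + w)" for y
            unfolding p1_def psi1_def by (rule psi_shift[OF fR ch eta])
          show "exp (- gnorm R w / \<eta>) \<le> 1" using gnorm_nonneg[OF fR, of w] eta by simp
        qed
        then show ?thesis by (simp add: \<phi>_def phi_def)
      qed
      have cond: "(\<Sum>u\<in>UNIV. ((\<Sum>z\<in>UNIV. f k z * p2 (u - z)) - (\<Sum>z\<in>UNIV. f k z * p1 z))\<^sup>2 * p1 u) \<le> \<epsilon>\<^sup>2"
      proof -
        have "k \<in> {1..k}" using k3 by simp
        then have "(\<Sum>y\<in>UNIV. (alpha2 k \<epsilon> (A k) R \<eta> (x k + y) - alpha1 (A k) R \<eta> (x k))\<^sup>2 * psi1 R \<eta> y) \<le> \<epsilon>\<^sup>2"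
          using reg by (auto simp: regular_value_def)
        then show ?thesis unfolding alpha2_eq ak_def[symmetric] ake by (simp add: f_def p1_def p2_def)
      qed
      have "\<bar>(\<Sum>y\<in>UNIV. \<Sum>z\<in>UNIV. (f 1 y * sqrt (p1 y)) * (f k z * sqrt (p1 z)) * psipow p2 (Suc (k - 3)) (- (y + z)))
          - (\<Sum>y\<in>UNIV. f 1 y * p1 y) * (\<Sum>z\<in>UNIV. f k z * p1 z)\<bar>
         \<le> \<epsilon> + 2 * expect (psipow p2 (Suc (k - 3))) \<phi> + 2 * expect (psipow p2 (k - 3)) \<phi>"
        by (rule lemmaC[OF p1n p1s p1m shift p2n p2s f01 f01 cond]) (use e0 in simp)
      then show ?thesis unfolding S_def \<Psi>_def g1 gk a1e ake kk .
    qed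
    have Ep2: "expect p2 \<phi> \<le> \<epsilon> / (8 * real k)"
    proof (cases "R = {}")
      case True
      then have "\<phi> = (\<lambda>_. 0)" by (auto simp: \<phi>_def phi_def gnorm_def)
      then show ?thesis using e0 by (simp add: expect_def)
    next
      case False
      show ?thesis unfolding p2_def psi2_def \<phi>_def by (rule lemmaB[OF fR ch False e0 e1 eta k3])
    qed
    have stepE: "expect (psipow p2 j) \<phi> \<le> real j * (\<epsilon> / (8 * real k))" for j
    proof -
      have "expect (psipow p2 j) \<phi> \<le> real j * expect p2 \<phi>"
      proof (rule psipow_expect[OF p2n p2s])
        show "\<phi> (u + w) \<le> \<phi> u + \<phi> w" for u w unfolding \<phi>_def by (rule phi_sub[OF fR ch eta])
        show "\<phi> 0 = 0" by (simp add: \<phi>_def phi_def gnorm_zero[OF fR ch])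
      qed
      also have "\<dots> \<le> real j * (\<epsilon> / (8 * real k))" using Ep2 by (intro mult_left_mono) auto
      finally show ?thesis .
    qed
    have Esum: "2 * expect (psipow p2 (Suc (k - 3))) \<phi> + 2 * expect (psipow p2 (k - 3)) \<phi> \<le> \<epsilon> / 2"
    proof -
      have "2 * expect (psipow p2 (Suc (k - 3))) \<phi> + 2 * expect (psipow p2 (k - 3)) \<phi>
          \<le> 2 * (real (Suc (k - 3)) * (\<epsilon> / (8 * real k))) + 2 * (real (k - 3) * (\<epsilon> / (8 * real k)))"
      proof -
        have A1: "expect (psipow p2 (Suc (k - 3))) \<phi> \<le> real (Suc (k - 3)) * (\<epsilon> / (8 * real k))" by (rule stepE)
        have A2: "expect (psipow p2 (k - 3)) \<phi> \<le> real (k - 3) * (\<epsilon> / (8 * real k))" by (rule stepE)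
        show ?thesis using A1 A2 by linarith
      qed
      also have "\<dots> = (real (4 * k - 10)) * (\<epsilon> / (8 * real k))" using k3 by (simp add: of_nat_diff field_simps)
      also have "\<dots> \<le> (4 * real k) * (\<epsilon> / (8 * real k))" using e0 k3 by (intro mult_right_mono) auto
      also have "\<dots> = \<epsilon> / 2" using k3 by simp
      finally show ?thesis .
    qed
    have t1: "\<bar>Tform k g - a1 * P * ak\<bar> \<le> \<bar>Tform k g - Tform k h\<bar> + \<bar>P * S - P * (a1 * ak)\<bar>"
      unfolding stepT by (simp add: mult_ac)
    have t2: "\<bar>P * S - P * (a1 * ak)\<bar> = P * \<bar>S - a1 * ak\<bar>"
      using P01 by (simp add: right_diff_distrib[symmetric] abs_mult)
    have t3: "P * \<bar>S - a1 * ak\<bar> \<le> 1 * \<bar>S - a1 * ak\<bar>" using P01 by (intro mult_right_mono) auto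
    have "\<bar>Tform k g - a1 * P * ak\<bar> \<le> real (k - 2) * \<epsilon> + (\<epsilon> + \<epsilon> / 2)"
      using t1 t2 t3 stepA stepC Esum by linarith
    also have "\<dots> \<le> real k * \<epsilon>" using k3 e0 by (simp add: of_nat_diff algebra_simps)
    also have "\<dots> \<le> 4 * 2 ^ k * \<epsilon>"
    proof -
      have "real k \<le> 2 ^ k" using k_le_pow[of k] by (metis of_nat_le_iff of_nat_numeral of_nat_power)
      moreover have "(2::real) ^ k \<le> 4 * 2 ^ k" by simp
      ultimately have "real k \<le> 4 * 2 ^ k" by linarith
      then show ?thesis using e0 by (intro mult_right_mono) auto
    qed
    finally show ?thesis .
  qed
  then show ?thesis unfolding g_def a1_def ak_def P_def a_def .
qed

end
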